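(* The diamond product $\diamond$ and the shuffle product $\sqcup\!\sqcup$ on $\mathfrak D$ are associative.
   Context: Let $q$ be a prime power. Let $\Gamma=\{x_{n,\varepsilon}\}_{n\in\mathbb N,\varepsilon\in\mathbb F_q^*}$ be an alphabet with weights $w(x_{n,\varepsilon})=n$, $\langle\Gamma\rangle$ the set of words over $\Gamma$ (empty word $1$, juxtaposition = concatenation) and $\mathfrak D$ the $\mathbb F_q$-vector space with basis $\langle\Gamma\rangle$; write $x_n:=x_{n,1}$. For positive integers $r,s,j$ put $\Delta^j_{r,s}=(-1)^{r-1}\binom{j-1}{r-1}+(-1)^{s-1}\binom{j-1}{s-1}$ if $(q-1)\mid j$ and $0$ otherwise. The bilinear products $\diamond,\sqcup\!\sqcup$ on $\mathfrak D$ are defined recursively by $1\diamond\mathfrak a=\mathfrak a\diamond1=\mathfrak a$, $1\sqcup\!\sqcup\mathfrak a=\mathfrak a\sqcup\!\sqcup1=\mathfrak a$ and, for nonempty words $\mathfrak a=x_{a,\alpha}\mathfrak a_-$, $\mathfrak b=x_{b,\beta}\mathfrak b_-$: $\mathfrak a\diamond\mathfrak b=x_{a+b,\alpha\beta}(\mathfrak a_-\sqcup\!\sqcup\mathfrak b_-)+\sum_{i+j=a+b}\Delta^j_{a,b}x_{i,\alpha\beta}(x_j\sqcup\!\sqcup(\mathfrak a_-\sqcup\!\sqcup\mathfrak b_-))$ and $\mathfrak a\sqcup\!\sqcup\mathfrak b=x_{a,\alpha}(\mathfrak a_-\sqcup\!\sqcup\mathfrak b)+x_{b,\beta}(\mathfrak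 a\sqcup\!\sqcup\mathfrak b_-)+\mathfrak a\diamond\mathfrak b$ ($i,j$ positive integers). *)

theory Defs
  imports Main "HOL-Library.Function_Algebras"
begin

text \<open>The field F_q is modelled by an arbitrary finite field type 'k (q = CARD('k)).
  A letter x_{n,e} is the pair (n, e) with n \<ge> 1 and e \<noteq> 0; words are lists of letters;
  elements of the vector space D are functions from words to 'k with finite support
  on valid words.\<close>

type_synonym 'k letter = "nat \<times> 'k"
type_synonym 'k word = "'k letter list"
type_synonym 'k vec = "'k word \<Rightarrow> 'k"

definition supp :: "'k::zero vec \<Rightarrow> 'k word set" where
  "supp v = {w. v w \<noteq> 0}"

definition valid_word :: "'k::zero word \<Rightarrow> bool" where
  "valid_word w \<longleftrightarrow> (\<forall>(n, e) \<in> set w. 1 \<le> n \<and> e \<noteq> 0)"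

definition DD :: "'k::zero vec set" where
  "DD = {v. finite (supp v) \<and> (\<forall>w \<in> supp v. valid_word w)}"

definition basis :: "'k word \<Rightarrow> 'k::{zero,one} vec" where
  "basis w = (\<lambda>z. if z = w then 1 else 0)"

definition pre :: "'k letter \<Rightarrow> 'k::zero vec \<Rightarrow> 'k vec" where
  "pre l v = (\<lambda>z. case z of [] \<Rightarrow> 0 | l' # z' \<Rightarrow> if l' = l then v z' else 0)"

definition smul :: "'k \<Rightarrow> 'k::times vec \<Rightarrow> 'k vec" where
  "smul c v = (\<lambda>z. c * v z)"

definition lin_ext :: "('k word \<Rightarrow> 'k vec) \<Rightarrow> 'k::comm_ring_1 vec \<Rightarrow> 'k vec" where
  "lin_ext f v = (\<lambda>z. \<Sum>u\<in>supp v. v u * f u z)"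

definition bil_ext :: "('k word \<Rightarrow> 'k word \<Rightarrow> 'k vec) \<Rightarrow> 'k::comm_ring_1 vec \<Rightarrow> 'k vec \<Rightarrow> 'k vec" where
  "bil_ext f u v = (\<lambda>z. \<Sum>a\<in>supp u. \<Sum>b\<in>supp v. u a * v b * f a b z)"

definition Delta :: "nat \<Rightarrow> nat \<Rightarrow> nat \<Rightarrow> 'k::{finite,comm_ring_1}" where
  "Delta r s j = (if (card (UNIV :: 'k set) - 1) dvd j then (-1) ^ (r - 1) * of_nat ((j - 1) choose (r - 1)) + (-1) ^ (s - 1) * of_nat ((j - 1) choose (s - 1)) else (0::'k))"

text \<open>Shuffle of the single letter x_j = x_{j,1} with a word (needed for the term
  x_j shuffle (a_- shuffle b_-) in the diamond product).  Here x_j diamond b is inlined.\<close>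
fun lsh :: "nat \<Rightarrow> 'k::{finite,field} word \<Rightarrow> 'k vec" where
  "lsh j [] = basis [(j, 1)]"
| "lsh j ((b, \<beta>) # w) =
     pre (j, 1) (basis ((b, \<beta>) # w)) + pre (b, \<beta>) (lsh j w)
     + (pre (j + b, \<beta>) (basis w)
        + (\<Sum>k\<in>{1..<j + b}. smul (Delta j b k) (pre (j + b - k, \<beta>) (lsh k w))))"

text \<open>Diamond product of words, given the shuffle product on the tails.\<close>
definition dm_step :: "'k letter \<Rightarrow> 'k letter \<Rightarrow> 'k::{finite,field} vec \<Rightarrow> 'k vec" where
  "dm_step x y s = (case x of (a, \<alpha>) \<Rightarrow> case y of (b, \<beta>) \<Rightarrow>
      pre (a + b, \<alpha> * \<beta>) s
      + (\<Sum>k\<in>{1..<a + b}. smul (Delta a b k) (pre (a + b - k, \<alpha> * \<beta>) (lin_ext (lsh k) s))))"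

fun sh_w :: "'k::{finite,field} word \<Rightarrow> 'k word \<Rightarrow> 'k vec" where
  "sh_w [] b = basis b"
| "sh_w a [] = basis a"
| "sh_w (x # a) (y # b) =
     pre x (sh_w a (y # b)) + pre y (sh_w (x # a) b) + dm_step x y (sh_w a b)"

fun dm_w :: "'k::{finite,field} word \<Rightarrow> 'k word \<Rightarrow> 'k vec" where
  "dm_w [] b = basis b"
| "dm_w a [] = basis a"
| "dm_w (x # a) (y # b) = dm_step x y (sh_w a b)"

definition diamond :: "'k::{finite,field} vec \<Rightarrow> 'k vec \<Rightarrow> 'k vec" where
  "diamond = bil_ext dm_w"

definition shuffle :: "'k::{finite,field} vec \<Rightarrow> 'k vec \<Rightarrow> 'k vec" where
  "shuffle = bil_ext sh_w"

end

theory Submission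
  imports Defs "HOL-Computational_Algebra.Polynomial" "HOL-Computational_Algebra.Formal_Laurent_Series"
begin

unbundle fps_syntax

lemma sum_fun_apply: "(sum f A) x = (\<Sum>a\<in>A. f a x)"
  by (induct A rule: infinite_finite_induct) auto

lemma zfun[simp]: "(\<lambda>a. 0) = (0::'k::zero vec)" by (simp add: zero_fun_def)
lemma pfun[simp]: "(\<lambda>a. f a + g a) = (f + g::'k::plus vec)" by (simp add: plus_fun_def)

definition FS :: "'k::comm_ring_1 vec \<Rightarrow> bool" where "FS v \<longleftrightarrow> finite (supp v)"

lemma supp_iff: "w \<in> supp v \<longleftrightarrow> v w \<noteq> 0" by (simp add: supp_def)

lemma notin_supp: "w \<notin> supp v \<Longrightarrow> v w = 0" by (simp add: supp_def)

lemma supp_add: "supp ((u::'k::comm_ring_1 vec) + v) \<subseteq> supp u \<union> supp v"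
  by (auto simp: supp_def)

lemma supp_zero[simp]: "supp (0::'k::comm_ring_1 vec) = {}"
  by (auto simp: supp_def)

lemma supp_smul: "supp (smul c (u::'k::comm_ring_1 vec)) \<subseteq> supp u"
  by (auto simp: supp_def smul_def)

lemma supp_basis: "supp (basis w :: 'k::comm_ring_1 vec) = {w}"
  by (auto simp: supp_def basis_def)

lemma supp_sum: "finite I \<Longrightarrow> supp (\<Sum>i\<in>I. (f i :: 'k::comm_ring_1 vec)) \<subseteq> (\<Union>i\<in>I. supp (f i))"
  proof (induct I rule: finite_induct)
    case (insert x F)
    have "supp (sum f (insert x F)) = supp (f x + sum f F)" using insert by simp
    also have "\<dots> \<subseteq> supp (f x) \<union> supp (sum f F)" by (rule supp_add)
    also have "\<dots> \<subseteq> (\<Union>i\<in>insert x F. supp (f i))" using insert by auto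
    finally show ?case .
  qed auto

lemma supp_pre: "supp (pre l v) = Cons l ` supp v"
proof (rule set_eqI)
  fix x show "x \<in> supp (pre l v) \<longleftrightarrow> x \<in> Cons l ` supp v"
    by (cases x) (auto simp: supp_def pre_def)
qed

lemma FS_add[simp,intro]: "FS u \<Longrightarrow> FS v \<Longrightarrow> FS ((u::'k::comm_ring_1 vec) + v)"
  unfolding FS_def using supp_add finite_subset by blast

lemma FS_zero[simp,intro]: "FS 0"
  unfolding FS_def by simp

lemma FS_smul[simp,intro]: "FS u \<Longrightarrow> FS (smul c (u::'k::comm_ring_1 vec))"
  unfolding FS_def using supp_smul finite_subset by blast

lemma FS_basis[simp,intro]: "FS (basis w :: 'k::comm_ring_1 vec)"
  unfolding FS_def by (simp add: supp_basis)

lemma FS_sum[simp,intro]: "finite I \<Longrightarrow> (\<And>i. i \<in> I \<Longrightarrow> FS (f i)) \<Longrightarrow> FS (\<Sum>i\<in>I. (f i :: 'k::comm_ring_1 vec))"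
  by (induct I rule: finite_induct) simp_all

lemma FS_pre[simp,intro]: "FS v \<Longrightarrow> FS (pre l v)"
  unfolding FS_def by (simp add: supp_pre)

lemma pre_add: "pre l (u + v) = pre l u + pre l (v::'k::comm_ring_1 vec)"
  by (rule ext) (simp add: pre_def split: list.splits)

lemma pre_smul: "pre l (smul c u) = smul c (pre l (u::'k::comm_ring_1 vec))"
  by (rule ext) (simp add: pre_def smul_def split: list.splits)

lemma pre_zero[simp]: "pre l 0 = (0::'k::comm_ring_1 vec)"
  by (rule ext) (simp add: pre_def split: list.splits)

lemma pre_sum: "finite I \<Longrightarrow> pre l (\<Sum>i\<in>I. f i) = (\<Sum>i\<in>I. pre l (f i :: 'k::comm_ring_1 vec))"
  by (induct I rule: finite_induct) (simp_all add: pre_add)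

lemma pre_basis[simp]: "pre l (basis w) = (basis (l # w) :: 'k::comm_ring_1 vec)"
  by (rule ext) (simp add: pre_def basis_def split: list.splits)

lemma smul_add: "smul c (u + v) = smul c u + smul c (v::'k::comm_ring_1 vec)"
  by (rule ext) (simp add: smul_def algebra_simps)

lemma smul_add2: "smul (c + d) u = smul c u + smul d (u::'k::comm_ring_1 vec)"
  by (rule ext) (simp add: smul_def algebra_simps)

lemma smul_smul: "smul c (smul d u) = smul (c * d) (u::'k::comm_ring_1 vec)"
  by (rule ext) (simp add: smul_def algebra_simps)

lemma smul_one[simp]: "smul 1 u = (u::'k::comm_ring_1 vec)"
  by (rule ext) (simp add: smul_def)

lemma smul_zero[simp]: "smul c 0 = (0::'k::comm_ring_1 vec)"
  by (rule ext) (simp add: smul_def)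

lemma smul_zero2[simp]: "smul 0 u = (0::'k::comm_ring_1 vec)"
  by (rule ext) (simp add: smul_def)

lemma smul_sum: "finite I \<Longrightarrow> smul c (\<Sum>i\<in>I. f i) = (\<Sum>i\<in>I. smul c (f i :: 'k::comm_ring_1 vec))"
  by (induct I rule: finite_induct) (simp_all add: smul_add)

lemma smul_sum2: "finite I \<Longrightarrow> smul (\<Sum>i\<in>I. f i) u = (\<Sum>i\<in>I. smul (f i) (u :: 'k::comm_ring_1 vec))"
  by (induct I rule: finite_induct) (simp_all add: smul_add2)

lemma vec_decomp:
  assumes "FS (u::'k::comm_ring_1 vec)"
  shows "u = (\<Sum>a\<in>supp u. smul (u a) (basis a))"
proof (rule ext)
  fix z
  have "(\<Sum>a\<in>supp u. smul (u a) (basis a)) z = (\<Sum>a\<in>supp u. u a * (if z = a then 1 else 0))"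
    by (simp add: sum_fun_apply smul_def basis_def)
  also have "\<dots> = u z"
    using assms by (auto simp: FS_def supp_def if_distrib sum.delta' cong: if_cong)
  finally show "u z = (\<Sum>a\<in>supp u. smul (u a) (basis a)) z" by simp
qed

definition linF :: "('k::comm_ring_1 vec \<Rightarrow> 'k vec) \<Rightarrow> bool" where
  "linF L \<longleftrightarrow> (\<forall>u v. FS u \<longrightarrow> FS v \<longrightarrow> L (u + v) = L u + L v) \<and> (\<forall>c u. FS u \<longrightarrow> L (smul c u) = smul c (L u))"

lemma linF_add: "linF L \<Longrightarrow> FS u \<Longrightarrow> FS v \<Longrightarrow> L (u + v) = L u + L v"
  by (simp add: linF_def)

lemma linF_smul: "linF L \<Longrightarrow> FS u \<Longrightarrow> L (smul c u) = smul c (L u)"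
  by (simp add: linF_def)

lemma linF_zero: "linF L \<Longrightarrow> L 0 = 0"
  using linF_smul[of L 0 0] by simp

lemma linF_sum: "finite I \<Longrightarrow> linF L \<Longrightarrow> (\<And>i. i \<in> I \<Longrightarrow> FS (f i)) \<Longrightarrow> L (\<Sum>i\<in>I. f i) = (\<Sum>i\<in>I. L (f i))"
  by (induct I rule: finite_induct) (simp_all add: linF_add linF_zero)

lemma linF_decomp: "linF L \<Longrightarrow> FS u \<Longrightarrow> L u = (\<Sum>a\<in>supp u. smul (u a) (L (basis a)))"
  apply (subst vec_decomp, assumption)
  apply (subst linF_sum, simp add: FS_def, assumption, simp)
  apply (simp add: linF_smul)
  done

lemma linF_ext:
  assumes "linF L" "linF R" "FS u" "\<And>a. a \<in> supp u \<Longrightarrow> L (basis a) = R (basis a)"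
  shows "L u = R u"
  using assms linF_decomp[of L u] linF_decomp[of R u] by (metis (no_types, lifting) sum.cong)

lemma linF_pre: "linF (pre l)"
  by (simp add: linF_def pre_add pre_smul)

lemma linF_id: "linF (\<lambda>x. x)"
  by (simp add: linF_def)

lemma linF_comp: "linF L \<Longrightarrow> linF R \<Longrightarrow> (\<And>u. FS u \<Longrightarrow> FS (R u)) \<Longrightarrow> linF (\<lambda>x. L (R x))"
  by (simp add: linF_def)

lemma linF_plus: "linF L \<Longrightarrow> linF R \<Longrightarrow> linF (\<lambda>x. L x + R x)"
  by (simp add: linF_def smul_add algebra_simps)

lemma linF_smulc: "linF L \<Longrightarrow> linF (\<lambda>x. smul c (L x))"
  by (simp add: linF_def smul_add smul_smul mult.commute)

lemma linF_sumc: "finite I \<Longrightarrow> (\<And>i. i \<in> I \<Longrightarrow> linF (L i)) \<Longrightarrow> linF (\<lambda>x. \<Sum>i\<in>I. L i x)"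
  by (simp add: linF_def sum.distrib smul_sum)

lemma linF_const0: "linF (\<lambda>x. 0)"
  by (simp add: linF_def)

lemma bil_ext_eq:
  fixes u v :: "'k::comm_ring_1 vec"
  assumes "finite A" "supp u \<subseteq> A" "finite B" "supp v \<subseteq> B"
  shows "bil_ext f u v = (\<lambda>z. \<Sum>a\<in>A. \<Sum>b\<in>B. u a * v b * f a b z)"
proof (rule ext)
  fix z
  have fu: "finite (supp u)" "finite (supp v)" using assms finite_subset by auto
  have "(\<Sum>a\<in>A. \<Sum>b\<in>B. u a * v b * f a b z) = (\<Sum>a\<in>supp u. \<Sum>b\<in>B. u a * v b * f a b z)"
    using assms fu by (intro sum.mono_neutral_right) (auto simp: supp_def)
  also have "\<dots> = (\<Sum>a\<in>supp u. \<Sum>b\<in>supp v. u a * v b * f a b z)"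
    using assms fu by (intro sum.cong refl sum.mono_neutral_right) (auto simp: supp_def)
  finally show "bil_ext f u v z = (\<Sum>a\<in>A. \<Sum>b\<in>B. u a * v b * f a b z)"
    by (simp add: bil_ext_def)
qed

lemma lin_ext_eq:
  fixes v :: "'k::comm_ring_1 vec"
  assumes "finite A" "supp v \<subseteq> A"
  shows "lin_ext f v = (\<lambda>z. \<Sum>a\<in>A. v a * f a z)"
proof (rule ext)
  fix z
  show "lin_ext f v z = (\<Sum>a\<in>A. v a * f a z)"
    unfolding lin_ext_def
    using assms by (intro sum.mono_neutral_left) (auto simp: supp_def)
qed

lemma lin_ext_linF: "linF (lin_ext f)"
  unfolding linF_def
proof (intro conjI allI impI)
  fix u v :: "'a vec" assume "FS u" "FS v"
  then have fin: "finite (supp u \<union> supp v)" by (simp add: FS_def)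
  show "lin_ext f (u + v) = lin_ext f u + lin_ext f v"
    apply (subst lin_ext_eq[OF fin], use supp_add in blast)
    apply (subst lin_ext_eq[OF fin], blast)
    apply (subst lin_ext_eq[OF fin], blast)
    by (rule ext) (simp add: algebra_simps sum.distrib)
next
  fix c and u :: "'a vec" assume "FS u"
  then have fin: "finite (supp u)" by (simp add: FS_def)
  show "lin_ext f (smul c u) = smul c (lin_ext f u)"
    apply (subst lin_ext_eq[OF fin], use supp_smul in blast)
    apply (subst lin_ext_eq[OF fin], blast)
    by (rule ext) (simp add: smul_def sum_distrib_left algebra_simps)
qed

lemma lin_ext_basis[simp]: "lin_ext f (basis w) = f w"
  by (rule ext) (simp add: lin_ext_def supp_basis, simp add: basis_def)

lemma supp_lin_ext: "supp (lin_ext f v) \<subseteq> (\<Union>a\<in>supp v. supp (f a))"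
  unfolding lin_ext_def supp_def
  by (auto elim!: sum.not_neutral_contains_not_neutral)

lemma FS_lin_ext[intro]: "FS v \<Longrightarrow> (\<And>a. a \<in> supp v \<Longrightarrow> FS (f a)) \<Longrightarrow> FS (lin_ext f v)"
  unfolding FS_def using supp_lin_ext by (metis (no_types, lifting) finite_UN_I finite_subset)

lemma bil_ext_linF1: "FS v \<Longrightarrow> linF (\<lambda>u. bil_ext f u v)"
  unfolding linF_def
proof (intro conjI allI impI)
  fix u1 u2 :: "'a vec" assume "FS u1" "FS u2" "FS v"
  then have fin: "finite (supp u1 \<union> supp u2)" "finite (supp v)" by (auto simp: FS_def)
  show "bil_ext f (u1 + u2) v = bil_ext f u1 v + bil_ext f u2 v"
    apply (subst bil_ext_eq[OF fin(1) _ fin(2)], use supp_add in blast, blast)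
    apply (subst bil_ext_eq[OF fin(1) _ fin(2)], blast, blast)
    apply (subst bil_ext_eq[OF fin(1) _ fin(2)], blast, blast)
    by (rule ext) (simp add: algebra_simps sum.distrib)
next
  fix c and u :: "'a vec" assume "FS u" "FS v"
  then have fin: "finite (supp u)" "finite (supp v)" by (auto simp: FS_def)
  show "bil_ext f (smul c u) v = smul c (bil_ext f u v)"
    apply (subst bil_ext_eq[OF fin(1) _ fin(2)], use supp_smul in blast, blast)
    apply (subst bil_ext_eq[OF fin(1) _ fin(2)], blast, blast)
    by (rule ext) (simp add: smul_def sum_distrib_left algebra_simps)
qed

lemma bil_ext_linF2: "FS u \<Longrightarrow> linF (\<lambda>v. bil_ext f u v)"
  unfolding linF_def
proof (intro conjI allI impI)
  fix v1 v2 :: "'a vec" assume "FS v1" "FS v2" "FS u"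
  then have fin: "finite (supp u)" "finite (supp v1 \<union> supp v2)" by (auto simp: FS_def)
  show "bil_ext f u (v1 + v2) = bil_ext f u v1 + bil_ext f u v2"
    apply (subst bil_ext_eq[OF fin(1) _ fin(2)], blast, use supp_add in blast)
    apply (subst bil_ext_eq[OF fin(1) _ fin(2)], blast, blast)
    apply (subst bil_ext_eq[OF fin(1) _ fin(2)], blast, blast)
    by (rule ext) (simp add: algebra_simps sum.distrib)
next
  fix c and v :: "'a vec" assume "FS u" "FS v"
  then have fin: "finite (supp u)" "finite (supp v)" by (auto simp: FS_def)
  show "bil_ext f u (smul c v) = smul c (bil_ext f u v)"
    apply (subst bil_ext_eq[OF fin(1) _ fin(2)], blast, use supp_smul in blast)
    apply (subst bil_ext_eq[OF fin(1) _ fin(2)], blast, blast)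
    by (rule ext) (simp add: smul_def sum_distrib_left algebra_simps)
qed

lemma bil_ext_basis[simp]: "bil_ext f (basis a) (basis b) = f a b"
  by (rule ext) (simp add: bil_ext_def supp_basis, simp add: basis_def)

lemma supp_bil_ext: "supp (bil_ext f u v) \<subseteq> (\<Union>a\<in>supp u. \<Union>b\<in>supp v. supp (f a b))"
  unfolding bil_ext_def supp_def
  apply (auto elim!: sum.not_neutral_contains_not_neutral)
  by (metis mult_zero_right)

lemma FS_bil_ext[intro]: "FS u \<Longrightarrow> FS v \<Longrightarrow> (\<And>a b. a \<in> supp u \<Longrightarrow> b \<in> supp v \<Longrightarrow> FS (f a b)) \<Longrightarrow> FS (bil_ext f u v)"
  unfolding FS_def using supp_bil_ext
  by (metis (no_types, lifting) finite_UN_I finite_subset)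

lemma lsh_eq: "lsh k w = sh_w [(k, 1)] w"
proof (induct w)
  case Nil
  then show ?case by simp
next
  case (Cons p w)
  obtain b \<beta> where p: "p = (b, \<beta>)" by (cases p)
  show ?case using Cons by (simp add: p dm_step_def)
qed

lemma FS_lsh[simp,intro]: "FS (lsh k w :: 'k::{finite,field} vec)"
proof (induct w arbitrary: k)
  case Nil
  then show ?case by simp
next
  case (Cons p w)
  obtain b \<beta> where p: "p = (b, \<beta>)" by (cases p)
  show ?case using Cons by (simp add: p)
qed

lemma FS_dm_step[simp,intro]: "FS s \<Longrightarrow> FS (dm_step x y (s :: 'k::{finite,field} vec))"
  by (cases x, cases y) (auto simp: dm_step_def intro!: FS_add FS_sum FS_smul FS_pre FS_lin_ext)

lemma FS_sh_w[simp,intro]: "FS (sh_w a b :: 'k::{finite,field} vec)"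
  by (induct a b rule: sh_w.induct) auto

lemma FS_dm_w[simp,intro]: "FS (dm_w a b :: 'k::{finite,field} vec)"
  by (induct a b rule: dm_w.induct) auto

lemma FS_shuffle[simp,intro]: "FS A \<Longrightarrow> FS B \<Longrightarrow> FS (shuffle A (B :: 'k::{finite,field} vec))"
  unfolding shuffle_def by (rule FS_bil_ext) auto

lemma FS_diamond[simp,intro]: "FS A \<Longrightarrow> FS B \<Longrightarrow> FS (diamond A (B :: 'k::{finite,field} vec))"
  unfolding diamond_def by (rule FS_bil_ext) auto

lemma shuffle_basis[simp]: "shuffle (basis a) (basis b) = (sh_w a b :: 'k::{finite,field} vec)"
  by (simp add: shuffle_def)

lemma diamond_basis[simp]: "diamond (basis a) (basis b) = (dm_w a b :: 'k::{finite,field} vec)"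
  by (simp add: diamond_def)

lemma linF_sh1: "FS B \<Longrightarrow> linF (\<lambda>A. shuffle A (B :: 'k::{finite,field} vec))"
  unfolding shuffle_def by (rule bil_ext_linF1)

lemma linF_sh2: "FS A \<Longrightarrow> linF (\<lambda>B. shuffle A (B :: 'k::{finite,field} vec))"
  unfolding shuffle_def by (rule bil_ext_linF2)

lemma linF_dm1: "FS B \<Longrightarrow> linF (\<lambda>A. diamond A (B :: 'k::{finite,field} vec))"
  unfolding diamond_def by (rule bil_ext_linF1)

lemma linF_dm2: "FS A \<Longrightarrow> linF (\<lambda>B. diamond A (B :: 'k::{finite,field} vec))"
  unfolding diamond_def by (rule bil_ext_linF2)

lemma sh_add1: "FS A1 \<Longrightarrow> FS A2 \<Longrightarrow> FS B \<Longrightarrow> shuffle (A1 + A2) B = shuffle A1 B + shuffle A2 (B :: 'k::{finite,field} vec)"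
  using linF_add[OF linF_sh1[of B], of A1 A2] by simp
lemma sh_add2: "FS A \<Longrightarrow> FS B1 \<Longrightarrow> FS B2 \<Longrightarrow> shuffle A (B1 + B2) = shuffle A B1 + shuffle A (B2 :: 'k::{finite,field} vec)"
  using linF_add[OF linF_sh2[of A], of B1 B2] by simp
lemma sh_smul1: "FS A \<Longrightarrow> FS B \<Longrightarrow> shuffle (smul c A) B = smul c (shuffle A (B :: 'k::{finite,field} vec))"
  using linF_smul[OF linF_sh1[of B], of A c] by simp
lemma sh_smul2: "FS A \<Longrightarrow> FS B \<Longrightarrow> shuffle A (smul c B) = smul c (shuffle A (B :: 'k::{finite,field} vec))"
  using linF_smul[OF linF_sh2[of A], of B c] by simp
lemma sh_sum1: "finite I \<Longrightarrow> (\<And>i. i \<in> I \<Longrightarrow> FS (f i)) \<Longrightarrow> FS B \<Longrightarrow> shuffle (\<Sum>i\<in>I. f i) B = (\<Sum>i\<in>I. shuffle (f i) (B :: 'k::{finite,field} vec))"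
  using linF_sh1[of B] linF_sum[of I "\<lambda>A. shuffle A B" f] by simp
lemma sh_sum2: "finite I \<Longrightarrow> (\<And>i. i \<in> I \<Longrightarrow> FS (f i)) \<Longrightarrow> FS A \<Longrightarrow> shuffle A (\<Sum>i\<in>I. f i) = (\<Sum>i\<in>I. shuffle A (f i :: 'k::{finite,field} vec))"
  using linF_sh2[of A] linF_sum[of I "\<lambda>B. shuffle A B" f] by simp

lemma sh_unit1: "FS B \<Longrightarrow> shuffle (basis []) B = (B :: 'k::{finite,field} vec)"
  using linF_ext[OF linF_sh2[of "basis []"] linF_id, of B] by simp

lemma sh_unit2: "FS A \<Longrightarrow> shuffle A (basis []) = (A :: 'k::{finite,field} vec)"
proof -
  have "\<And>a. sh_w a [] = (basis a :: 'k vec)" by (case_tac a) auto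
  then show "FS A \<Longrightarrow> ?thesis" using linF_ext[OF linF_sh1[of "basis []"] linF_id, of A] by simp
qed

lemma dm_unit1: "FS B \<Longrightarrow> diamond (basis []) B = (B :: 'k::{finite,field} vec)"
  using linF_ext[OF linF_dm2[of "basis []"] linF_id, of B] by simp

lemma dm_unit2: "FS A \<Longrightarrow> diamond A (basis []) = (A :: 'k::{finite,field} vec)"
proof -
  have "\<And>a. dm_w a [] = (basis a :: 'k vec)" by (case_tac a) auto
  then show "FS A \<Longrightarrow> ?thesis" using linF_ext[OF linF_dm1[of "basis []"] linF_id, of A] by simp
qed

lemma lin_ext_lsh: "FS S \<Longrightarrow> lin_ext (lsh k) S = shuffle (basis [(k,1)]) (S :: 'k::{finite,field} vec)"
  using linF_ext[OF lin_ext_linF linF_sh2[of "basis [(k,1)]"], of S] by (simp add: lsh_eq)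

definition DSg :: "'k letter \<Rightarrow> 'k letter \<Rightarrow> ('k letter \<Rightarrow> 'k word \<Rightarrow> 'k vec) \<Rightarrow> 'k::{finite,field} vec" where
  "DSg x y H = (case x of (a, \<alpha>) \<Rightarrow> case y of (b, \<beta>) \<Rightarrow>
     H (a + b, \<alpha> * \<beta>) [] + (\<Sum>k\<in>{1..<a + b}. smul (Delta a b k) (H (a + b - k, \<alpha> * \<beta>) [(k, 1)])))"

lemma dm_step_DSg: "FS S \<Longrightarrow> dm_step x y S = DSg x y (\<lambda>l r. pre l (shuffle (basis r) (S :: 'k::{finite,field} vec)))"
  by (cases x, cases y) (simp add: dm_step_def DSg_def sh_unit1 lin_ext_lsh)

lemma DSg_linF: "linF L \<Longrightarrow> (\<And>l r. FS (H l r)) \<Longrightarrow> L (DSg x y H) = DSg x y (\<lambda>l r. L (H l r))"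
  by (cases x, cases y) (simp add: DSg_def linF_add linF_sum linF_smul)

lemma FS_DSg[simp,intro]: "(\<And>l r. FS (H l r)) \<Longrightarrow> FS (DSg x y H)"
  by (cases x, cases y) (simp add: DSg_def)

lemma DSg_add: "DSg x y (\<lambda>l r. H1 l r + H2 l r) = DSg x y H1 + DSg x y H2"
  by (cases x, cases y) (simp add: DSg_def smul_add sum.distrib algebra_simps)

lemma DSg_cong:
  assumes "1 \<le> fst x"
    and "\<And>l r. 1 \<le> fst l \<Longrightarrow> (r = [] \<or> (\<exists>k. 1 \<le> k \<and> r = [(k, 1)])) \<Longrightarrow> H l r = H' l r"
  shows "DSg x y H = DSg x y H'"
proof -
  obtain a \<alpha> b \<beta> where xy: "x = (a, \<alpha>)" "y = (b, \<beta>)" by (cases x, cases y)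
  have "\<And>k. k \<in> {1..<a + b} \<Longrightarrow> H (a + b - k, \<alpha> * \<beta>) [(k, 1)] = H' (a + b - k, \<alpha> * \<beta>) [(k, 1)]"
    by (rule assms(2)) auto
  moreover have "H (a + b, \<alpha> * \<beta>) [] = H' (a + b, \<alpha> * \<beta>) []"
    using assms by (simp add: xy)
  ultimately show ?thesis by (simp add: DSg_def xy)
qed

lemma linF_dm_step: "linF (dm_step x (y :: 'k::{finite,field} letter))"
proof -
  obtain a \<alpha> b \<beta> where xy: "x = (a, \<alpha>)" "y = (b, \<beta>)" by (cases x, cases y)
  show ?thesis unfolding xy dm_step_def
    by (auto intro!: linF_plus linF_pre linF_sumc linF_smulc linF_comp[OF linF_pre] lin_ext_linF)
qed

lemma sh_rec: "FS A \<Longrightarrow> FS B \<Longrightarrow> shuffle (pre x A) (pre y B) =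
   pre x (shuffle A (pre y B)) + pre y (shuffle (pre x A) B) + dm_step x y (shuffle A (B :: 'k::{finite,field} vec))"
proof -
  assume A: "FS A" and B: "FS B"
  have step1: "shuffle (pre x (basis a)) (pre y B) =
   pre x (shuffle (basis a) (pre y B)) + pre y (shuffle (pre x (basis a)) B) + dm_step x y (shuffle (basis a) B)" for a
  proof -
    have l1: "linF (\<lambda>B. shuffle (pre x (basis a)) (pre y B))"
      by (rule linF_comp[OF linF_sh2 linF_pre]) auto
    have l2: "linF (\<lambda>B. pre x (shuffle (basis a) (pre y B)) + pre y (shuffle (pre x (basis a)) B) + dm_step x y (shuffle (basis a) B))"
      by (intro linF_plus linF_comp[OF linF_pre] linF_comp[OF linF_dm_step] linF_comp[OF linF_sh2] linF_sh2 linF_pre) auto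
    show ?thesis using linF_ext[OF l1 l2 B] by simp
  qed
  have l1: "linF (\<lambda>A. shuffle (pre x A) (pre y B))"
    using B by (intro linF_comp[OF linF_sh1 linF_pre]) auto
  have l2: "linF (\<lambda>A. pre x (shuffle A (pre y B)) + pre y (shuffle (pre x A) B) + dm_step x y (shuffle A B))"
    using B by (intro linF_plus linF_comp[OF linF_pre] linF_comp[OF linF_dm_step] linF_comp[OF linF_sh1] linF_sh1 linF_pre) auto
  show ?thesis using linF_ext[OF l1 l2 A] step1 by simp
qed

lemma dm_rec: "FS A \<Longrightarrow> FS B \<Longrightarrow> diamond (pre x A) (pre y B) = dm_step x y (shuffle A (B :: 'k::{finite,field} vec))"
proof -
  assume A: "FS A" and B: "FS B"
  have step1: "diamond (pre x (basis a)) (pre y B) = dm_step x y (shuffle (basis a) B)" for a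
  proof -
    have l1: "linF (\<lambda>B. diamond (pre x (basis a)) (pre y B))"
      by (rule linF_comp[OF linF_dm2 linF_pre]) auto
    have l2: "linF (\<lambda>B. dm_step x y (shuffle (basis a) B))"
      by (intro linF_comp[OF linF_dm_step] linF_sh2) auto
    show ?thesis using linF_ext[OF l1 l2 B] by simp
  qed
  have l1: "linF (\<lambda>A. diamond (pre x A) (pre y B))"
    using B by (intro linF_comp[OF linF_dm1 linF_pre]) auto
  have l2: "linF (\<lambda>A. dm_step x y (shuffle A B))"
    using B by (intro linF_comp[OF linF_dm_step] linF_sh1) auto
  show ?thesis using linF_ext[OF l1 l2 A] step1 by simp
qed

lemma Delta_comm: "Delta a b k = Delta b a k"
  by (simp add: Delta_def add.commute)

lemma dm_step_comm: "dm_step (x :: 'k::{finite,field} letter) y s = dm_step y x s"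
  by (cases x, cases y) (simp add: dm_step_def Delta_comm add.commute mult.commute)

lemma sh_w_comm: "sh_w a b = (sh_w b a :: 'k::{finite,field} vec)"
proof (induct a b rule: sh_w.induct)
  case (1 b)
  then show ?case by (cases b) auto
next
  case (2 v va)
  then show ?case by simp
next
  case (3 x a y b)
  then show ?case by (simp add: dm_step_comm add.commute add.left_commute)
qed

lemma sh_comm: "FS A \<Longrightarrow> FS B \<Longrightarrow> shuffle A B = shuffle B (A :: 'k::{finite,field} vec)"
proof -
  assume A: "FS A" and B: "FS B"
  have "shuffle (basis a) B = shuffle B (basis a)" for a
    using linF_ext[OF linF_sh2 linF_sh1 B, of "basis a" "basis a"] by (simp add: sh_w_comm)
  then show ?thesis using linF_ext[OF linF_sh1 linF_sh2 A, of B B] B by simp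
qed

lemma card_char: "of_nat (card (UNIV::'k::{finite,field} set)) = (0::'k)"
proof -
  have "(\<Sum>c\<in>UNIV. c + 1) = (\<Sum>c\<in>(UNIV::'k set). c)"
    by (rule sum.reindex_bij_witness[of _ "\<lambda>c. c - 1" "\<lambda>c. c + 1"]) auto
  then show ?thesis by (simp add: sum.distrib)
qed

lemma card_ge2: "2 \<le> card (UNIV::'k::{finite,field} set)"
proof -
  have "card {0::'k, 1} = 2" by simp
  moreover have "card {0::'k, 1} \<le> card (UNIV::'k set)" by (rule card_mono) auto
  ultimately show ?thesis by simp
qed

lemma fermat:
  assumes "c \<noteq> 0" shows "c ^ (card (UNIV::'k::{finite,field} set) - 1) = (1::'k)"
proof -
  let ?N = "UNIV - {0::'k}"
  have "(\<Prod>d\<in>?N. c * d) = (\<Prod>d\<in>?N. d)"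
    by (rule prod.reindex_bij_witness[of _ "\<lambda>d. d / c" "\<lambda>d. c * d"]) (use assms in auto)
  then have "c ^ card ?N * (\<Prod>d\<in>?N. d) = (\<Prod>d\<in>?N. d)" by (simp add: prod.distrib)
  moreover have "(\<Prod>d\<in>?N. d) \<noteq> 0" by simp
  moreover have "card ?N = card (UNIV::'k set) - 1" by (simp add: card_Diff_singleton)
  ultimately show ?thesis by simp
qed

lemma neg1_pow: "(card (UNIV::'k::{finite,field} set) - 1) dvd j \<Longrightarrow> (-1::'k::{finite,field}) ^ j = 1"
proof -
  assume "(card (UNIV::'k set) - 1) dvd j"
  then obtain t where "j = (card (UNIV::'k set) - 1) * t" by auto
  then show ?thesis using fermat[of "-1::'k"] by (simp add: power_mult)
qed

lemma charsum: "(\<Sum>c\<in>UNIV-{0::'k::{finite,field}}. c ^ j) = (if (card (UNIV::'k set) - 1) dvd j then -1 else (0::'k::{finite,field}))"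
proof (cases "(card (UNIV::'k set) - 1) dvd j")
  case True
  then obtain t where j: "j = (card (UNIV::'k set) - 1) * t" by auto
  have "(\<Sum>c\<in>UNIV-{0::'k}. c ^ j) = (\<Sum>c\<in>UNIV-{0::'k}. 1)"
    using fermat[where 'k='k] by (intro sum.cong) (auto simp: j power_mult)
  also have "\<dots> = of_nat (card (UNIV::'k set) - 1)" by (simp add: card_Diff_singleton)
  also have "\<dots> = of_nat (card (UNIV::'k set)) - 1" using card_ge2[where 'k='k] by (simp add: of_nat_diff)
  also have "\<dots> = -1" by (simp add: card_char)
  finally show ?thesis using True by simp
next
  case False
  let ?Q = "card (UNIV::'k set) - 1"
  have Qpos: "?Q \<ge> 1" using card_ge2[where 'k='k] by simp
  let ?r = "j mod ?Q"
  have r0: "?r \<noteq> 0" using False by (simp add: mod_eq_0_iff_dvd)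
  have rlt: "?r < ?Q" using Qpos by simp
  have "\<exists>g::'k. g \<noteq> 0 \<and> g ^ ?r \<noteq> 1"
  proof (rule ccontr)
    assume "\<not> ?thesis"
    then have all: "\<And>g::'k. g \<noteq> 0 \<Longrightarrow> g ^ ?r = 1" by blast
    define p :: "'k poly" where "p = [:-1:] + monom 1 ?r"
    have dp: "degree p = ?r" unfolding p_def
      by (subst degree_add_eq_right) (use r0 in \<open>auto simp: degree_monom_eq\<close>)
    have p0: "p \<noteq> 0" using dp r0 by auto
    have "UNIV - {0::'k} \<subseteq> {x. poly p x = 0}"
      using all by (auto simp: p_def poly_monom)
    then have "card (UNIV - {0::'k}) \<le> card {x. poly p x = 0}"
      by (intro card_mono) auto
    also have "\<dots> \<le> degree p" by (rule card_poly_roots_bound[OF p0])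
    finally show False using dp rlt by (simp add: card_Diff_singleton)
  qed
  then obtain g :: 'k where g: "g \<noteq> 0" "g ^ ?r \<noteq> 1" by blast
  have gj: "g ^ j = g ^ ?r"
  proof -
    have "j = ?Q * (j div ?Q) + ?r" by simp
    then have "g ^ j = (g ^ ?Q) ^ (j div ?Q) * g ^ ?r" by (metis power_add power_mult)
    then show ?thesis using fermat[OF g(1)] by simp
  qed
  let ?S = "(\<Sum>c\<in>UNIV-{0::'k}. c ^ j)"
  have "?S = (\<Sum>c\<in>UNIV-{0::'k}. (g * c) ^ j)"
    by (rule sum.reindex_bij_witness[of _ "\<lambda>d. g * d" "\<lambda>d. d / g"]) (use g in auto)
  also have "\<dots> = g ^ j * ?S" by (simp add: power_mult_distrib sum_distrib_left)
  finally have "(g ^ j - 1) * ?S = 0" by (simp add: algebra_simps)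
  then have "?S = 0" using g gj by simp
  then show ?thesis using False by simp
qed

lemma charsum_inv: "(\<Sum>c\<in>UNIV-{0}. inverse c ^ j) = (\<Sum>c\<in>UNIV-{0::'k::{finite,field}}. c ^ j)"
  by (rule sum.reindex_bij_witness[of _ inverse inverse]) auto

lemma banachG:
  fixes x y :: "'a::comm_ring_1"
  assumes xy: "x + y = 1"
  shows "(\<Sum>k<a. of_nat ((a + b') choose k) * x ^ k * y ^ (a + b' - k)) = y ^ Suc b' * (\<Sum>k<a. of_nat ((b' + k) choose k) * x ^ k)"
proof (induct a)
  case 0
  then show ?case by simp
next
  case (Suc a)
  let ?m = "a + b'"
  let ?G = "\<lambda>a. (\<Sum>k<a. of_nat ((a + b') choose k) * x ^ k * y ^ (a + b' - k))"
  have pascal: "of_nat (Suc ?m choose k) = (of_nat (?m choose k) :: 'a) + (if k = 0 then 0 else of_nat (?m choose (k - 1)))" for k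
    by (cases k) auto
  have "?G (Suc a) = (\<Sum>k<Suc a. of_nat (Suc ?m choose k) * x ^ k * y ^ (Suc ?m - k))" by simp
  also have "\<dots> = (\<Sum>k<Suc a. of_nat (?m choose k) * x ^ k * y ^ (Suc ?m - k))
      + (\<Sum>k<Suc a. (if k = 0 then 0 else of_nat (?m choose (k - 1))) * x ^ k * y ^ (Suc ?m - k))"
    by (simp add: pascal algebra_simps sum.distrib)
  also have "(\<Sum>k<Suc a. of_nat (?m choose k) * x ^ k * y ^ (Suc ?m - k)) = y * (?G a + of_nat (?m choose a) * x ^ a * y ^ b')"
  proof -
    have "(\<Sum>k<Suc a. of_nat (?m choose k) * x ^ k * y ^ (Suc ?m - k)) = (\<Sum>k<Suc a. y * (of_nat (?m choose k) * x ^ k * y ^ (?m - k)))"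
      by (rule sum.cong) (auto simp: Suc_diff_le)
    also have "\<dots> = y * (\<Sum>k<Suc a. of_nat (?m choose k) * x ^ k * y ^ (?m - k))" by (rule sum_distrib_left[symmetric])
    also have "\<dots> = y * (?G a + of_nat (?m choose a) * x ^ a * y ^ b')" by simp
    finally show ?thesis .
  qed
  also have "(\<Sum>k<Suc a. (if k = 0 then 0 else of_nat (?m choose (k - 1))) * x ^ k * y ^ (Suc ?m - k)) = x * ?G a"
  proof -
    have "(\<Sum>k<Suc a. (if k = 0 then 0 else of_nat (?m choose (k - 1))) * x ^ k * y ^ (Suc ?m - k))
        = (\<Sum>k<a. of_nat (?m choose k) * x ^ Suc k * y ^ (Suc ?m - Suc k))"
      by (subst sum.lessThan_Suc_shift) simp
    also have "\<dots> = x * ?G a" by (simp add: sum_distrib_left algebra_simps)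
    finally show ?thesis .
  qed
  finally have "?G (Suc a) = (x + y) * ?G a + of_nat (?m choose a) * x ^ a * y ^ Suc b'"
    by (simp add: algebra_simps)
  then show ?case using Suc xy by (simp add: algebra_simps add.commute)
qed

lemma banach:
  fixes x y :: "'a::comm_ring_1"
  assumes xy: "x + y = 1" and a: "1 \<le> a" and b: "1 \<le> b"
  shows "y ^ b * (\<Sum>k<a. of_nat ((b - 1 + k) choose k) * x ^ k) + x ^ a * (\<Sum>k<b. of_nat ((a - 1 + k) choose k) * y ^ k) = 1"
proof -
  obtain b' where b': "b = Suc b'" using b by (cases b) auto
  obtain a' where a': "a = Suc a'" using a by (cases a) auto
  let ?n = "a + b'"
  have n2: "?n = b + a'" using a' b' by simp
  have G: "(\<Sum>k<a. of_nat (?n choose k) * x ^ k * y ^ (?n - k)) = y ^ b * (\<Sum>k<a. of_nat ((b - 1 + k) choose k) * x ^ k)"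
    using banachG[OF xy, of a b'] b' by simp
  have H: "(\<Sum>k<b. of_nat (?n choose k) * y ^ k * x ^ (?n - k)) = x ^ a * (\<Sum>k<b. of_nat ((a - 1 + k) choose k) * y ^ k)"
    using banachG[of y x b a'] xy a' b' by (simp add: add.commute n2)
  have "1 = (x + y) ^ ?n" using xy by simp
  also have "\<dots> = (\<Sum>k\<le>?n. of_nat (?n choose k) * x ^ k * y ^ (?n - k))" by (simp add: binomial_ring)
  also have "\<dots> = (\<Sum>k\<in>{..<a}. of_nat (?n choose k) * x ^ k * y ^ (?n - k)) + (\<Sum>k\<in>{a..?n}. of_nat (?n choose k) * x ^ k * y ^ (?n - k))"
  proof -
    have "{..?n} = {..<a} \<union> {a..?n}" by auto
    then show ?thesis by (simp add: sum.union_disjoint ivl_disj_int)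
  qed
  also have "(\<Sum>k\<in>{a..?n}. of_nat (?n choose k) * x ^ k * y ^ (?n - k)) = (\<Sum>k<b. of_nat (?n choose k) * y ^ k * x ^ (?n - k))"
    apply (rule sum.reindex_bij_witness[of _ "\<lambda>k. ?n - k" "\<lambda>k. ?n - k"])
    using a' b' by (auto simp: binomial_symmetric[symmetric] mult.commute mult.left_commute)
  finally show ?thesis using G H by simp
qed

lemma inv_pow_cancel: "(u::'f::field) \<noteq> 0 \<Longrightarrow> i \<le> a \<Longrightarrow> inverse u ^ a * u ^ i = inverse u ^ (a - i)"
proof -
  assume u: "u \<noteq> 0" and ia: "i \<le> a"
  have "inverse u ^ a = inverse u ^ (a - i) * inverse u ^ i" using ia by (simp flip: power_add)
  moreover have "inverse u ^ i * u ^ i = 1" using u by (simp flip: power_mult_distrib)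
  ultimately show ?thesis by (simp add: mult.assoc)
qed

lemma pf:
  fixes u v :: "'f::field"
  assumes u: "u \<noteq> 0" and v: "v \<noteq> 0" and e: "v - u \<noteq> 0" and a: "1 \<le> a" and b: "1 \<le> b"
  shows "inverse u ^ a * inverse v ^ b =
    (\<Sum>i<a. of_nat ((b - 1 + i) choose i) * (-1) ^ i * inverse (v - u) ^ (b + i) * inverse u ^ (a - i)) +
    (\<Sum>i<b. of_nat ((a - 1 + i) choose i) * (-1) ^ a * inverse (v - u) ^ (a + i) * inverse v ^ (b - i))"
proof -
  define e' where "e' = v - u"
  define x where "x = - u * inverse e'"
  define y where "y = v * inverse e'"
  have "x + y = (v - u) * inverse e'" by (simp add: x_def y_def algebra_simps)
  then have xy: "x + y = 1" using e by (simp add: e'_def)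
  have B: "y ^ b * (\<Sum>k<a. of_nat ((b - 1 + k) choose k) * x ^ k) + x ^ a * (\<Sum>k<b. of_nat ((a - 1 + k) choose k) * y ^ k) = 1"
    by (rule banach[OF xy a b])
  define M where "M = inverse u ^ a * inverse v ^ b"
  have vb: "inverse v ^ b * v ^ b = 1" using v by (simp flip: power_mult_distrib)
  have ua: "inverse u ^ a * u ^ a = 1" using u by (simp flip: power_mult_distrib)
  have t1: "M * (y ^ b * (of_nat ((b - 1 + k) choose k) * x ^ k)) =
     of_nat ((b - 1 + k) choose k) * (-1) ^ k * inverse e' ^ (b + k) * inverse u ^ (a - k)" if "k < a" for k
  proof -
    have "M * (y ^ b * (of_nat ((b - 1 + k) choose k) * x ^ k)) =
      of_nat ((b - 1 + k) choose k) * (-1) ^ k * (inverse e' ^ b * inverse e' ^ k) * (inverse u ^ a * u ^ k) * (inverse v ^ b * v ^ b)"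
      by (simp add: M_def x_def y_def power_mult_distrib power_minus[of "u * inverse e'"] algebra_simps)
    also have "\<dots> = of_nat ((b - 1 + k) choose k) * (-1) ^ k * inverse e' ^ (b + k) * inverse u ^ (a - k)"
      using that u by (simp add: vb inv_pow_cancel power_add)
    finally show ?thesis .
  qed
  have t2: "M * (x ^ a * (of_nat ((a - 1 + k) choose k) * y ^ k)) =
     of_nat ((a - 1 + k) choose k) * (-1) ^ a * inverse e' ^ (a + k) * inverse v ^ (b - k)" if "k < b" for k
  proof -
    have "M * (x ^ a * (of_nat ((a - 1 + k) choose k) * y ^ k)) =
      of_nat ((a - 1 + k) choose k) * (-1) ^ a * (inverse e' ^ a * inverse e' ^ k) * (inverse v ^ b * v ^ k) * (inverse u ^ a * u ^ a)"
      by (simp add: M_def x_def y_def power_mult_distrib power_minus[of "u * inverse e'"] algebra_simps)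
    also have "\<dots> = of_nat ((a - 1 + k) choose k) * (-1) ^ a * inverse e' ^ (a + k) * inverse v ^ (b - k)"
      using that v by (simp add: ua inv_pow_cancel power_add)
    finally show ?thesis .
  qed
  have "M = M * (y ^ b * (\<Sum>k<a. of_nat ((b - 1 + k) choose k) * x ^ k) + x ^ a * (\<Sum>k<b. of_nat ((a - 1 + k) choose k) * y ^ k))"
    using B by simp
  also have "\<dots> = (\<Sum>k<a. M * (y ^ b * (of_nat ((b - 1 + k) choose k) * x ^ k))) + (\<Sum>k<b. M * (x ^ a * (of_nat ((a - 1 + k) choose k) * y ^ k)))"
    by (simp add: distrib_left sum_distrib_left)
  also have "\<dots> = (\<Sum>k<a. of_nat ((b - 1 + k) choose k) * (-1) ^ k * inverse e' ^ (b + k) * inverse u ^ (a - k)) +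
     (\<Sum>k<b. of_nat ((a - 1 + k) choose k) * (-1) ^ a * inverse e' ^ (a + k) * inverse v ^ (b - k))"
    by (rule arg_cong2[where f="(+)"]; rule sum.cong[OF refl]) (use t1 t2 in auto)
  finally show ?thesis by (simp add: M_def e'_def)
qed

lemma Xw_ne0: "fls_X + fls_const w \<noteq> (0::'f::field fls)"
proof
  assume "fls_X + fls_const w = (0::'f fls)"
  then have "(fls_X + fls_const w) $$ 1 = (0::'f fls) $$ 1" by simp
  then show False by simp
qed

lemma Xw_nth_neg:
  assumes "w \<noteq> 0" "n < 0"
  shows "(inverse (fls_X + fls_const w) ^ i) $$ n = (0::'f::field)"
proof -
  have sd: "fls_subdegree (fls_X + fls_const w :: 'f fls) = 0"
    by (rule fls_subdegree_eqI) (use assms in auto)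
  have "fls_subdegree (inverse (fls_X + fls_const w :: 'f fls) ^ i) = 0"
    by (simp add: fls_subdegree_pow sd)
  then show ?thesis using assms(2) by simp
qed

lemma X0_nth: "(inverse (fls_X + fls_const 0) ^ i) $$ n = (if n = - int i then 1 else (0::'f::field))"
  by (simp add: fls_inverse_X)

definition PP :: "'f::field set \<Rightarrow> nat \<Rightarrow> 'f fls" where
  "PP W i = (\<Sum>w\<in>W. inverse (fls_X + fls_const w) ^ i)"

lemma PP_nth:
  assumes "finite W" "0 \<in> W" "1 \<le> m"
  shows "PP W i $$ (- int m) = (if m = i then 1 else 0)"
proof -
  have "PP W i $$ (- int m) = (\<Sum>w\<in>W. (inverse (fls_X + fls_const w) ^ i) $$ (- int m))"
    by (simp add: PP_def fls_nth_sum)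
  also have "\<dots> = (inverse (fls_X + fls_const 0) ^ i) $$ (- int m) + (\<Sum>w\<in>W-{0}. (inverse (fls_X + fls_const w) ^ i) $$ (- int m))"
    using assms by (simp add: sum.remove)
  also have "(\<Sum>w\<in>W-{0}. (inverse (fls_X + fls_const w) ^ i) $$ (- int m)) = 0"
    using assms by (intro sum.neutral) (auto intro!: Xw_nth_neg)
  finally show ?thesis by (simp only: X0_nth) auto
qed

definition sig :: "'f::field set \<Rightarrow> nat \<Rightarrow> 'f" where
  "sig W m = (\<Sum>w\<in>W-{0}. inverse w ^ m)"

lemma shift_sum:
  assumes "finite W" "\<forall>w\<in>W. \<forall>w'\<in>W. w' - w \<in> W" "w \<in> W" "0 \<in> W"
  shows "(\<Sum>w'\<in>W-{w}. f (w' - w)) = (\<Sum>d\<in>W-{0}. f (d::'f::field))"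
proof (rule sum.reindex_bij_witness[of _ "\<lambda>d. d + w" "\<lambda>w'. w' - w"])
  fix d assume d: "d \<in> W - {0}"
  have "0 - w \<in> W" using assms by blast
  then have "d - (0 - w) \<in> W" using assms d by blast
  then show "d + w \<in> W - {w}" using d by simp
qed (use assms in auto)

lemma fls_const_sum: "fls_const (\<Sum>a\<in>A. f a) = (\<Sum>a\<in>A. fls_const (f a))"
  by (induct A rule: infinite_finite_induct) (auto simp: fls_plus_const[symmetric])

lemma sum_offdiag_swap:
  fixes F :: "'a \<Rightarrow> 'a \<Rightarrow> 'b::ab_group_add"
  assumes "finite W"
  shows "(\<Sum>w\<in>W. \<Sum>w'\<in>W-{w}. F w w') = (\<Sum>w'\<in>W. \<Sum>w\<in>W-{w'}. F w w')"
proof -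
  have "(\<Sum>w\<in>W. \<Sum>w'\<in>W-{w}. F w w') = (\<Sum>w\<in>W. (\<Sum>w'\<in>W. F w w') - F w w)"
    using assms by (intro sum.cong refl) (simp add: sum_diff1)
  also have "\<dots> = (\<Sum>w\<in>W. \<Sum>w'\<in>W. F w w') - (\<Sum>w\<in>W. F w w)" by (simp add: sum_subtractf)
  also have "\<dots> = (\<Sum>w'\<in>W. \<Sum>w\<in>W. F w w') - (\<Sum>w\<in>W. F w w)" by (subst sum.swap) simp
  also have "\<dots> = (\<Sum>w'\<in>W. (\<Sum>w\<in>W. F w w') - F w' w')" by (simp add: sum_subtractf)
  also have "\<dots> = (\<Sum>w'\<in>W. \<Sum>w\<in>W-{w'}. F w w')"
    using assms by (intro sum.cong refl) (simp add: sum_diff1)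
  finally show ?thesis .
qed

lemma Xw_diff: "(fls_X + fls_const w') - (fls_X + fls_const w) = fls_const (w' - (w::'f::field))"
  by (simp add: fls_minus_const)

lemma fls_const_inj[simp]: "(fls_const a = fls_const b) = (a = (b::'f::zero))"
  by (metis fls_const_nth)

lemma inv_const_pow: "inverse (fls_const (c::'f::field)) ^ m = fls_const (inverse c ^ m)"
  by (simp add: fls_inverse_const fls_const_power)

lemma chen_raw:
  fixes W :: "'f::field set"
  assumes W: "finite W" "0 \<in> W" "\<forall>w\<in>W. \<forall>w'\<in>W. w' - w \<in> W" and a: "1 \<le> a" and b: "1 \<le> b"
  shows "PP W a * PP W b = PP W (a + b)
    + (\<Sum>i<a. of_nat ((b - 1 + i) choose i) * (-1) ^ i * fls_const (sig W (b + i)) * PP W (a - i))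
    + (\<Sum>i<b. of_nat ((a - 1 + i) choose i) * (-1) ^ i * fls_const (sig W (a + i)) * PP W (b - i))"
proof -
  define U where "U w = inverse (fls_X + fls_const w :: 'f fls)" for w
  define C1 where "C1 i = (of_nat ((b - 1 + i) choose i) :: 'f fls)" for i
  define C2 where "C2 i = (of_nat ((a - 1 + i) choose i) :: 'f fls)" for i
  have PPU: "PP W m = (\<Sum>w\<in>W. U w ^ m)" for m by (simp add: PP_def U_def)
  have "PP W a * PP W b = (\<Sum>w\<in>W. \<Sum>w'\<in>W. U w ^ a * U w' ^ b)"
    by (simp add: PPU sum_product)
  also have "\<dots> = (\<Sum>w\<in>W. U w ^ (a + b) + (\<Sum>w'\<in>W-{w}. U w ^ a * U w' ^ b))"
  proof (intro sum.cong refl)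
    fix w assume "w \<in> W"
    show "(\<Sum>w'\<in>W. U w ^ a * U w' ^ b) = U w ^ (a + b) + (\<Sum>w'\<in>W-{w}. U w ^ a * U w' ^ b)"
      using sum.remove[OF W(1) \<open>w \<in> W\<close>, of "\<lambda>w'. U w ^ a * U w' ^ b"] by (simp add: power_add)
  qed
  also have "\<dots> = PP W (a + b) + (\<Sum>w\<in>W. \<Sum>w'\<in>W-{w}. U w ^ a * U w' ^ b)"
    by (simp add: sum.distrib PPU)
  also have "(\<Sum>w\<in>W. \<Sum>w'\<in>W-{w}. U w ^ a * U w' ^ b) =
     (\<Sum>w\<in>W. \<Sum>w'\<in>W-{w}. (\<Sum>i<a. C1 i * (-1) ^ i * fls_const (inverse (w' - w) ^ (b + i)) * U w ^ (a - i)))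
   + (\<Sum>w\<in>W. \<Sum>w'\<in>W-{w}. (\<Sum>i<b. C2 i * (-1) ^ a * fls_const (inverse (w' - w) ^ (a + i)) * U w' ^ (b - i)))"
  proof -
    have "U w ^ a * U w' ^ b = (\<Sum>i<a. C1 i * (-1) ^ i * fls_const (inverse (w' - w) ^ (b + i)) * U w ^ (a - i))
       + (\<Sum>i<b. C2 i * (-1) ^ a * fls_const (inverse (w' - w) ^ (a + i)) * U w' ^ (b - i))" if "w' \<noteq> w" for w w'
    proof -
      have ne: "(fls_X + fls_const w') - (fls_X + fls_const w) \<noteq> (0 :: 'f fls)"
        using that by (simp add: Xw_diff)
      show ?thesis
        using pf[OF Xw_ne0[of w] Xw_ne0[of w'] ne a b]
        by (simp add: U_def C1_def C2_def Xw_diff fls_minus_const inv_const_pow)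
    qed
    then show ?thesis by (simp add: sum.distrib)
  qed
  also have "(\<Sum>w\<in>W. \<Sum>w'\<in>W-{w}. (\<Sum>i<a. C1 i * (-1) ^ i * fls_const (inverse (w' - w) ^ (b + i)) * U w ^ (a - i)))
      = (\<Sum>i<a. C1 i * (-1) ^ i * fls_const (sig W (b + i)) * PP W (a - i))"
  proof -
    have "(\<Sum>w\<in>W. \<Sum>w'\<in>W-{w}. (\<Sum>i<a. C1 i * (-1) ^ i * fls_const (inverse (w' - w) ^ (b + i)) * U w ^ (a - i)))
       = (\<Sum>i<a. \<Sum>w\<in>W. C1 i * (-1) ^ i * U w ^ (a - i) * (\<Sum>w'\<in>W-{w}. fls_const (inverse (w' - w) ^ (b + i))))"
      by (simp add: sum_distrib_left sum.swap[of _ "{..<a}"] algebra_simps)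
    also have "\<dots> = (\<Sum>i<a. \<Sum>w\<in>W. C1 i * (-1) ^ i * U w ^ (a - i) * fls_const (sig W (b + i)))"
    proof (intro sum.cong refl)
      fix i w assume "w \<in> W"
      then have "(\<Sum>w'\<in>W-{w}. fls_const (inverse (w' - w) ^ (b + i))) = fls_const (sig W (b + i))"
        unfolding sig_def fls_const_sum[symmetric]
        using shift_sum[OF W(1) W(3) _ W(2), of w "\<lambda>d. inverse d ^ (b + i)"] by simp
      then show "C1 i * (-1) ^ i * U w ^ (a - i) * (\<Sum>w'\<in>W-{w}. fls_const (inverse (w' - w) ^ (b + i))) =
          C1 i * (-1) ^ i * U w ^ (a - i) * fls_const (sig W (b + i))" by simp
    qed
    also have "\<dots> = (\<Sum>i<a. C1 i * (-1) ^ i * fls_const (sig W (b + i)) * PP W (a - i))"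
      by (simp add: PPU sum_distrib_left sum_distrib_right algebra_simps)
    finally show ?thesis .
  qed
  also have "(\<Sum>w\<in>W. \<Sum>w'\<in>W-{w}. (\<Sum>i<b. C2 i * (-1) ^ a * fls_const (inverse (w' - w) ^ (a + i)) * U w' ^ (b - i)))
      = (\<Sum>i<b. C2 i * (-1) ^ i * fls_const (sig W (a + i)) * PP W (b - i))"
  proof -
    have "(\<Sum>w\<in>W. \<Sum>w'\<in>W-{w}. (\<Sum>i<b. C2 i * (-1) ^ a * fls_const (inverse (w' - w) ^ (a + i)) * U w' ^ (b - i)))
       = (\<Sum>w'\<in>W. \<Sum>w\<in>W-{w'}. (\<Sum>i<b. C2 i * (-1) ^ a * fls_const (inverse (w' - w) ^ (a + i)) * U w' ^ (b - i)))"
      by (rule sum_offdiag_swap[OF W(1)])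
    also have "\<dots> = (\<Sum>i<b. \<Sum>w'\<in>W. C2 i * (-1) ^ a * U w' ^ (b - i) * (\<Sum>w\<in>W-{w'}. fls_const (inverse (w' - w) ^ (a + i))))"
      by (simp add: sum_distrib_left sum.swap[of _ "{..<b}"] algebra_simps)
    also have "\<dots> = (\<Sum>i<b. \<Sum>w'\<in>W. C2 i * (-1) ^ i * U w' ^ (b - i) * fls_const (sig W (a + i)))"
    proof (intro sum.cong refl)
      fix i w' assume w': "w' \<in> W"
      have "(\<Sum>w\<in>W-{w'}. inverse (w' - w) ^ (a + i)) = (\<Sum>w\<in>W-{w'}. (-1) ^ (a + i) * inverse (w - w') ^ (a + i))"
      proof (intro sum.cong refl)
        fix w
        have "inverse (w' - w) = - inverse (w - w')" by (simp add: inverse_minus_eq[symmetric])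
        then show "inverse (w' - w) ^ (a + i) = (-1) ^ (a + i) * inverse (w - w') ^ (a + i)"
          by (simp add: power_minus[of "inverse (w - w')"])
      qed
      also have "\<dots> = (-1) ^ (a + i) * sig W (a + i)"
        unfolding sig_def sum_distrib_left[symmetric]
        using shift_sum[OF W(1) W(3) w' W(2), of "\<lambda>d. inverse d ^ (a + i)"] by simp
      finally have "(\<Sum>w\<in>W-{w'}. fls_const (inverse (w' - w) ^ (a + i))) = (-1) ^ (a + i) * fls_const (sig W (a + i))"
        unfolding fls_const_sum[symmetric] by (metis fls_const_mult_const fls_const_power fls_const_uminus fls_const_1)
      moreover have "(-1::'f fls) ^ a * (-1) ^ (a + i) = (-1) ^ i"
        by (simp add: power_add mult.assoc[symmetric] flip: power_mult_distrib)
      ultimately show "C2 i * (-1) ^ a * U w' ^ (b - i) * (\<Sum>w\<in>W-{w'}. fls_const (inverse (w' - w) ^ (a + i))) =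
          C2 i * (-1) ^ i * U w' ^ (b - i) * fls_const (sig W (a + i))"
        by (simp add: algebra_simps)
    qed
    also have "\<dots> = (\<Sum>i<b. C2 i * (-1) ^ i * fls_const (sig W (a + i)) * PP W (b - i))"
      by (simp add: PPU sum_distrib_left sum_distrib_right algebra_simps)
    finally show ?thesis .
  qed
  finally show ?thesis by (simp add: C1_def C2_def add.assoc)
qed

lemma fls_neg1_pow: "(-1::'f::field fls) ^ i = fls_const ((-1) ^ i)"
  by (simp add: fls_const_power)

definition DX :: "nat \<Rightarrow> nat \<Rightarrow> nat \<Rightarrow> 'f::field" where
  "DX Q b j = (if Q dvd j then (-1) ^ (b - 1) * of_nat ((j - 1) choose (b - 1)) else 0)"

lemma chen_lem:
  fixes W :: "'f::field set" and \<zeta> :: "nat \<Rightarrow> 'f"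
  assumes a: "1 \<le> a" and b: "1 \<le> b"
    and sigh: "\<And>m. 1 \<le> m \<Longrightarrow> sig W m = (if Q dvd m then - \<zeta> m else 0)"
    and sgn: "\<And>m. Q dvd m \<Longrightarrow> (-1::'f) ^ m = 1"
  shows "(\<Sum>i<a. of_nat ((b - 1 + i) choose i) * (-1) ^ i * fls_const (sig W (b + i)) * PP W (a - i))
     = (\<Sum>j\<in>{1..<a+b}. fls_const (DX Q b j * \<zeta> j) * PP W (a + b - j))"
proof -
  have "(\<Sum>j\<in>{1..<a+b}. fls_const (DX Q b j * \<zeta> j) * PP W (a + b - j)) =
        (\<Sum>j\<in>{b..<a+b}. fls_const (DX Q b j * \<zeta> j) * PP W (a + b - j))"
  proof (rule sum.mono_neutral_right)
    show "\<forall>j\<in>{1..<a + b} - {b..<a + b}. fls_const (DX Q b j * \<zeta> j) * PP W (a + b - j) = 0"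
      by (auto simp: DX_def binomial_eq_0)
  qed (use b in auto)
  also have "\<dots> = (\<Sum>i\<in>{0..<a}. fls_const (DX Q b (i + b) * \<zeta> (i + b)) * PP W (a + b - (i + b)))"
    using sum.shift_bounds_nat_ivl[of "\<lambda>j. fls_const (DX Q b j * \<zeta> j) * PP W (a + b - j)" 0 b a] by simp
  also have "\<dots> = (\<Sum>i<a. of_nat ((b - 1 + i) choose i) * (-1) ^ i * fls_const (sig W (b + i)) * PP W (a - i))"
    unfolding atLeast0LessThan
  proof (intro sum.cong refl)
    fix i assume "i \<in> {..<a}"
    have key: "of_nat ((b - 1 + i) choose i) * (-1) ^ i * sig W (b + i) = DX Q b (i + b) * \<zeta> (i + b)"
    proof (cases "Q dvd (b + i)")
      case True
      have s1: "(-1::'f) ^ (b + i) = 1" using sgn[OF True] .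
      have s2: "(-1::'f) ^ (b - 1) = - ((-1) ^ i)"
      proof -
        obtain b' where b': "b = Suc b'" using b by (cases b) auto
        define x :: 'f where "x = (-1) ^ b'"
        define y :: 'f where "y = (-1) ^ i"
        have xy: "- (x * y) = 1" using s1 by (simp add: b' x_def y_def power_add)
        have yy: "y * y = 1" by (simp add: y_def flip: power_add)
        have "x = x * (y * y)" using yy by simp
        also have "\<dots> = (x * y) * y" by (simp add: mult.assoc)
        also have "\<dots> = - y" using xy by (metis minus_equation_iff mult_minus1)
        finally show ?thesis by (simp add: b' x_def y_def)
      qed
      have c: "((b + i - 1) choose (b - 1)) = ((b - 1 + i) choose i)"
        using b by (metis add.commute binomial_symmetric le_add2 add_diff_cancel_left' Nat.add_diff_assoc2)
      have d: "DX Q b (i + b) = (-1) ^ (b - 1) * of_nat ((b - 1 + i) choose i)"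
        unfolding DX_def add.commute[of i b] if_P[OF True] c ..
      have sg: "sig W (b + i) = - \<zeta> (b + i)" using sigh[of "b + i"] True b by simp
      show ?thesis unfolding d sg s2 by (simp add: algebra_simps)
    next
      case False
      then show ?thesis using b by (simp add: DX_def sigh add.commute)
    qed
    show "fls_const (DX Q b (i + b) * \<zeta> (i + b)) * PP W (a + b - (i + b)) =
        of_nat ((b - 1 + i) choose i) * (-1) ^ i * fls_const (sig W (b + i)) * PP W (a - i)"
      by (simp add: key[symmetric] fls_of_nat fls_neg1_pow)
  qed
  finally show ?thesis by simp
qed

definition DF :: "nat \<Rightarrow> nat \<Rightarrow> nat \<Rightarrow> nat \<Rightarrow> 'f::field" where
  "DF Q a b j = (if Q dvd j then (-1) ^ (a - 1) * of_nat ((j - 1) choose (a - 1)) + (-1) ^ (b - 1) * of_nat ((j - 1) choose (b - 1)) else 0)"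

lemma chen_delta:
  fixes W :: "'f::field set" and \<zeta> :: "nat \<Rightarrow> 'f"
  assumes W: "finite W" "0 \<in> W" "\<forall>w\<in>W. \<forall>w'\<in>W. w' - w \<in> W" and a: "1 \<le> a" and b: "1 \<le> b"
    and sigh: "\<And>m. 1 \<le> m \<Longrightarrow> sig W m = (if Q dvd m then - \<zeta> m else 0)"
    and sgn: "\<And>m. Q dvd m \<Longrightarrow> (-1::'f) ^ m = 1"
  shows "PP W a * PP W b = PP W (a + b) + (\<Sum>j\<in>{1..<a+b}. fls_const (DF Q a b j * \<zeta> j) * PP W (a + b - j))"
proof -
  have DFs: "DF Q a b j = DX Q a j + DX Q b j" for j by (simp add: DF_def DX_def)
  have "(\<Sum>j\<in>{1..<a+b}. fls_const (DF Q a b j * \<zeta> j) * PP W (a + b - j)) =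
     (\<Sum>j\<in>{1..<a+b}. fls_const (DX Q b j * \<zeta> j) * PP W (a + b - j)) + (\<Sum>j\<in>{1..<b+a}. fls_const (DX Q a j * \<zeta> j) * PP W (b + a - j))"
    by (simp add: DFs algebra_simps sum.distrib fls_plus_const[symmetric] add.commute)
  also have "\<dots> = (\<Sum>i<a. of_nat ((b - 1 + i) choose i) * (-1) ^ i * fls_const (sig W (b + i)) * PP W (a - i))
     + (\<Sum>i<b. of_nat ((a - 1 + i) choose i) * (-1) ^ i * fls_const (sig W (a + i)) * PP W (b - i))"
    using chen_lem[OF a b sigh sgn] chen_lem[OF b a sigh sgn] by simp
  finally show ?thesis using chen_raw[OF W a b] by (simp add: add.assoc)
qed

abbreviation P1 :: "nat \<Rightarrow> 'k::{finite,field} fls" where "P1 \<equiv> PP (UNIV :: 'k set)"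

lemma DF_Delta: "DF (card (UNIV :: 'k set) - 1) a b j = (Delta a b j :: 'k::{finite,field})"
  by (simp add: DF_def Delta_def)

lemma sig1: "1 \<le> m \<Longrightarrow> sig (UNIV :: 'k::{finite,field} set) m = (if (card (UNIV :: 'k set) - 1) dvd m then - 1 else 0)"
  by (simp add: sig_def charsum_inv charsum)

lemma chen1:
  assumes "1 \<le> a" "1 \<le> b"
  shows "(P1 a :: 'k::{finite,field} fls) * P1 b = P1 (a + b) + (\<Sum>j\<in>{1..<a+b}. fls_const (Delta a b j) * P1 (a + b - j))"
proof -
  have "(P1 a :: 'k fls) * P1 b = P1 (a + b) + (\<Sum>j\<in>{1..<a+b}. fls_const (DF (card (UNIV :: 'k set) - 1) a b j * 1) * P1 (a + b - j))"
    by (rule chen_delta[where \<zeta> = "\<lambda>_. 1"]) (use assms in \<open>auto simp: sig1 neg1_pow\<close>)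
  then show ?thesis by (simp only: DF_Delta mult_1_right)
qed

definition g2 :: "'k \<times> 'k \<Rightarrow> 'k::{finite,field} fls" where
  "g2 p = fls_const (fst p) * fls_X + fls_const (snd p)"

abbreviation W2 :: "'k::{finite,field} fls set" where "W2 \<equiv> range g2"

abbreviation S2 :: "nat \<Rightarrow> 'k::{finite,field} fls fls" where "S2 \<equiv> PP W2"

lemma g2_nth0[simp]: "g2 p $$ 0 = snd p" by (simp add: g2_def)
lemma g2_nth1[simp]: "g2 p $$ 1 = fst p" by (simp add: g2_def)

lemma g2_inj: "inj g2"
proof (rule injI)
  fix p q :: "'k::{finite,field} \<times> 'k" assume "g2 p = g2 q"
  then have "g2 p $$ 0 = g2 q $$ 0" "g2 p $$ 1 = g2 q $$ 1" by simp_all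
  then show "p = q" by (simp add: prod_eq_iff)
qed

lemma g2_diff: "g2 p' - g2 p = g2 (fst p' - fst p, snd p' - snd p)"
  by (simp add: g2_def algebra_simps fls_minus_const[symmetric])

lemma g2_zero: "g2 (0, 0) = 0" by (simp add: g2_def)

lemma W2_fin: "finite (W2 :: 'k::{finite,field} fls set)" by simp
lemma W2_0: "0 \<in> (W2 :: 'k::{finite,field} fls set)"
  using rangeI[of g2 "(0::'k, 0::'k)"] by (simp add: g2_zero)
lemma W2_cl: "\<forall>w\<in>(W2 :: 'k::{finite,field} fls set). \<forall>w'\<in>W2. w' - w \<in> W2"
proof (intro ballI)
  fix w w' :: "'k fls" assume "w \<in> W2" "w' \<in> W2"
  then obtain p p' where "w = g2 p" "w' = g2 p'" by auto
  then show "w' - w \<in> W2" by (simp add: g2_diff)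
qed
lemmas W2_props = W2_fin W2_0 W2_cl

lemma sig2:
  assumes m: "1 \<le> m"
  shows "sig (W2 :: 'k::{finite,field} fls set) m = (if (card (UNIV :: 'k set) - 1) dvd m then - (P1 m + 1) else 0)"
proof -
  let ?N = "UNIV - {0::'k}"
  let ?s = "(\<Sum>c\<in>?N. inverse c ^ m)"
  have s: "?s = (if (card (UNIV :: 'k set) - 1) dvd m then - 1 else 0)" by (simp add: charsum_inv charsum)
  have W0: "W2 - {0} = g2 ` (UNIV - {(0, 0)})"
    by (simp add: image_set_diff[OF g2_inj] g2_zero)
  have "sig W2 m = (\<Sum>p\<in>UNIV - {(0::'k, 0::'k)}. inverse (g2 p) ^ m)"
    unfolding sig_def W0 by (subst sum.reindex) (auto intro: inj_on_subset[OF g2_inj])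
  also have "UNIV - {(0::'k, 0::'k)} = (?N \<times> UNIV) \<union> ({0} \<times> ?N)" by auto
  also have "(\<Sum>p\<in>(?N \<times> UNIV) \<union> ({0} \<times> ?N). inverse (g2 p) ^ m) =
      (\<Sum>p\<in>?N \<times> UNIV. inverse (g2 p) ^ m) + (\<Sum>p\<in>{0} \<times> ?N. inverse (g2 p) ^ m)"
    by (rule sum.union_disjoint) auto
  also have "(\<Sum>p\<in>?N \<times> UNIV. inverse (g2 p) ^ m) = fls_const ?s * P1 m"
  proof -
    have "(\<Sum>p\<in>?N \<times> UNIV. inverse (g2 p) ^ m) = (\<Sum>c1\<in>?N. \<Sum>c0\<in>UNIV. inverse (g2 (c1, c0)) ^ m)"
      by (simp add: sum.cartesian_product)
    also have "\<dots> = (\<Sum>c1\<in>?N. fls_const (inverse c1 ^ m) * P1 m)"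
    proof (intro sum.cong refl)
      fix c1 :: 'k assume c1: "c1 \<in> ?N"
      have "(\<Sum>c0\<in>UNIV. inverse (g2 (c1, c0)) ^ m) = (\<Sum>c0\<in>UNIV. fls_const (inverse c1 ^ m) * inverse (fls_X + fls_const (c0 / c1)) ^ m)"
      proof (intro sum.cong refl)
        fix c0 :: 'k
        have "g2 (c1, c0) = fls_const c1 * (fls_X + fls_const (c0 / c1))"
          using c1 by (simp add: g2_def algebra_simps)
        then show "inverse (g2 (c1, c0)) ^ m = fls_const (inverse c1 ^ m) * inverse (fls_X + fls_const (c0 / c1)) ^ m"
          by (simp add: inverse_mult_distrib power_mult_distrib inv_const_pow)
      qed
      also have "\<dots> = fls_const (inverse c1 ^ m) * (\<Sum>c0\<in>UNIV. inverse (fls_X + fls_const (c0 / c1)) ^ m)"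
        by (simp add: sum_distrib_left)
      also have "(\<Sum>c0\<in>UNIV. inverse (fls_X + fls_const (c0 / c1)) ^ m) = P1 m"
        unfolding PP_def
        by (rule sum.reindex_bij_witness[of _ "\<lambda>c. c * c1" "\<lambda>c0. c0 / c1"]) (use c1 in auto)
      finally show "(\<Sum>c0\<in>UNIV. inverse (g2 (c1, c0)) ^ m) = fls_const (inverse c1 ^ m) * P1 m" .
    qed
    also have "\<dots> = fls_const ?s * P1 m" by (simp add: fls_const_sum sum_distrib_right)
    finally show ?thesis .
  qed
  also have "(\<Sum>p\<in>{0} \<times> ?N. inverse (g2 p) ^ m) = fls_const ?s"
  proof -
    have "(\<Sum>p\<in>{0} \<times> ?N. inverse (g2 p) ^ m) = (\<Sum>c\<in>?N. inverse (g2 (0, c)) ^ m)"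
      by (rule sum.reindex_bij_witness[of _ "\<lambda>c. (0, c)" snd]) auto
    also have "\<dots> = fls_const ?s" by (simp add: g2_def inv_const_pow fls_const_sum)
    finally show ?thesis .
  qed
  finally have "sig W2 m = fls_const ?s * (P1 m + 1)" by (simp add: algebra_simps)
  then show ?thesis using s by simp
qed

lemma fls_sgn: "(card (UNIV :: 'k set) - 1) dvd m \<Longrightarrow> (-1 :: 'k::{finite,field} fls) ^ m = 1"
  by (simp add: fls_neg1_pow neg1_pow)

lemma DF_Delta2: "DF (card (UNIV :: 'k set) - 1) a b j = fls_const (Delta a b j :: 'k::{finite,field})"
  by (simp add: DF_def Delta_def fls_of_nat fls_neg1_pow fls_plus_const)

lemma chen2:
  assumes "1 \<le> a" "1 \<le> b"
  shows "(S2 a :: 'k::{finite,field} fls fls) * S2 b = S2 (a + b) + (\<Sum>j\<in>{1..<a+b}. fls_const (fls_const (Delta a b j) * (P1 j + 1)) * S2 (a + b - j))"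
proof -
  have "(S2 a :: 'k fls fls) * S2 b = S2 (a + b) + (\<Sum>j\<in>{1..<a+b}. fls_const (DF (card (UNIV :: 'k set) - 1) a b j * (P1 j + 1)) * S2 (a + b - j))"
    by (rule chen_delta[OF W2_props assms]) (auto simp: sig2 fls_sgn)
  then show ?thesis by (simp only: DF_Delta2)
qed

definition pos_w :: "'k letter list \<Rightarrow> bool" where "pos_w w \<longleftrightarrow> (\<forall>p\<in>set w. 1 \<le> fst p)"
definition wt :: "'k letter list \<Rightarrow> nat" where "wt w = sum_list (map fst w)"
definition lab1 :: "'k::one letter list \<Rightarrow> bool" where "lab1 w \<longleftrightarrow> (\<forall>p\<in>set w. snd p = 1)"

lemma pos_w_simps[simp]: "pos_w [] = True" "pos_w (p # w) = (1 \<le> fst p \<and> pos_w w)"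
  by (auto simp: pos_w_def)
lemma wt_simps[simp]: "wt [] = 0" "wt (p # w) = fst p + wt w"
  by (auto simp: wt_def)
lemma lab1_simps[simp]: "lab1 [] = True" "lab1 (p # w) = (snd p = 1 \<and> lab1 w)"
  by (auto simp: lab1_def)

lemma in_supp_add: "w \<in> supp ((A::'k::comm_ring_1 vec) + B) \<Longrightarrow> w \<in> supp A \<or> w \<in> supp B"
  using supp_add by blast
lemma in_supp_smul: "w \<in> supp (smul c (A::'k::comm_ring_1 vec)) \<Longrightarrow> w \<in> supp A"
  using supp_smul by blast
lemma in_supp_sum: "finite I \<Longrightarrow> w \<in> supp (\<Sum>i\<in>I. (f i::'k::comm_ring_1 vec)) \<Longrightarrow> \<exists>i\<in>I. w \<in> supp (f i)"
  using supp_sum by blast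
lemma in_supp_pre: "w \<in> supp (pre l (A::'k::comm_ring_1 vec)) \<Longrightarrow> \<exists>w'. w = l # w' \<and> w' \<in> supp A"
  by (auto simp: supp_pre)
lemma in_supp_lin_ext: "w \<in> supp (lin_ext f (A::'k::comm_ring_1 vec)) \<Longrightarrow> \<exists>u\<in>supp A. w \<in> supp (f u)"
  using supp_lin_ext by blast
lemma in_supp_basis: "w \<in> supp (basis u :: 'k::comm_ring_1 vec) \<Longrightarrow> w = u"
  by (simp add: supp_basis)

definition SPROP :: "'k::one word \<Rightarrow> 'k word \<Rightarrow> 'k word \<Rightarrow> bool" where
  "SPROP a b w \<longleftrightarrow> pos_w w \<and> wt w = wt a + wt b \<and> length w \<le> length a + length b \<and> (lab1 a \<longrightarrow> lab1 b \<longrightarrow> lab1 w)"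

lemma dm_step_supp:
  fixes S :: "'k::{finite,field} vec"
  assumes w: "w \<in> supp (dm_step x y S)"
  shows "(\<exists>u. w = (fst x + fst y, snd x * snd y) # u \<and> u \<in> supp S) \<or>
         (\<exists>k u w'. 1 \<le> k \<and> k < fst x + fst y \<and> w = (fst x + fst y - k, snd x * snd y) # w' \<and> u \<in> supp S \<and> w' \<in> supp (sh_w [(k, 1)] u))"
proof -
  obtain a \<alpha> b \<beta> where xy: "x = (a, \<alpha>)" "y = (b, \<beta>)" by (cases x, cases y)
  from w have "w \<in> supp (pre (a + b, \<alpha> * \<beta>) S) \<or> w \<in> supp (\<Sum>k\<in>{1..<a + b}. smul (Delta a b k) (pre (a + b - k, \<alpha> * \<beta>) (lin_ext (lsh k) S)))"
    by (simp add: xy dm_step_def in_supp_add)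
  then show ?thesis
  proof
    assume "w \<in> supp (pre (a + b, \<alpha> * \<beta>) S)"
    then show ?thesis by (auto simp: xy dest!: in_supp_pre)
  next
    assume "w \<in> supp (\<Sum>k\<in>{1..<a + b}. smul (Delta a b k) (pre (a + b - k, \<alpha> * \<beta>) (lin_ext (lsh k) S)))"
    then obtain k where k: "k \<in> {1..<a+b}" "w \<in> supp (smul (Delta a b k) (pre (a + b - k, \<alpha> * \<beta>) (lin_ext (lsh k) S)))"
      using in_supp_sum[OF finite_atLeastLessThan] by blast
    then obtain w' where w': "w = (a + b - k, \<alpha> * \<beta>) # w'" "w' \<in> supp (lin_ext (lsh k) S)"
      by (auto dest!: in_supp_smul in_supp_pre)
    then obtain u where "u \<in> supp S" "w' \<in> supp (lsh k u)" by (auto dest!: in_supp_lin_ext)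
    then show ?thesis using k w' by (auto simp: xy lsh_eq)
  qed
qed

lemma supp_sh_w_aux:
  "\<forall>a b w. length a + length b = n \<longrightarrow> pos_w a \<longrightarrow> pos_w b \<longrightarrow> w \<in> supp (sh_w a b :: 'k::{finite,field} vec) \<longrightarrow> SPROP a b w"
proof (induct n rule: less_induct)
  case (less n)
  show ?case
  proof (intro allI impI)
    fix a b w :: "'k word"
    assume n: "length a + length b = n" and pa: "pos_w a" and pb: "pos_w b" and w: "w \<in> supp (sh_w a b)"
    show "SPROP a b w"
    proof (cases a)
      case Nil
      then show ?thesis using w pb by (auto simp: SPROP_def dest!: in_supp_basis)
    next
      case (Cons x a')
      note a = this
      show ?thesis
      proof (cases b)
        case Nil
        then show ?thesis using w pa a by (auto simp: SPROP_def dest!: in_supp_basis)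
      next
        case (Cons y b')
        note b = this
        have IH: "\<And>a b w. length a + length b < n \<Longrightarrow> pos_w a \<Longrightarrow> pos_w b \<Longrightarrow> w \<in> supp (sh_w a b :: 'k vec) \<Longrightarrow> SPROP a b w"
          using less by blast
        from w consider (A) "w \<in> supp (pre x (sh_w a' (y # b')))" | (B) "w \<in> supp (pre y (sh_w (x # a') b'))"
            | (C) "w \<in> supp (dm_step x y (sh_w a' b'))"
          by (auto simp: a b dest!: in_supp_add)
        then show ?thesis
        proof cases
          case A
          then obtain w' where "w = x # w'" "w' \<in> supp (sh_w a' (y # b'))" by (auto dest!: in_supp_pre)
          then show ?thesis using IH[of a' "y # b'" w'] n pa pb a b by (auto simp: SPROP_def)
        next
          case B
          then obtain w' where "w = y # w'" "w' \<in> supp (sh_w (x # a') b')" by (auto dest!: in_supp_pre)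
          then show ?thesis using IH[of "x # a'" b' w'] n pa pb a b by (auto simp: SPROP_def)
        next
          case C
          have x1: "1 \<le> fst x" and y1: "1 \<le> fst y" using pa pb a b by auto
          have S: "\<And>u. u \<in> supp (sh_w a' b') \<Longrightarrow> SPROP a' b' u"
            using IH n pa pb a b by auto
          from dm_step_supp[OF C]
          consider (C1) u where "w = (fst x + fst y, snd x * snd y) # u" "u \<in> supp (sh_w a' b')"
            | (C2) k u w' where "1 \<le> k" "k < fst x + fst y" "w = (fst x + fst y - k, snd x * snd y) # w'"
                "u \<in> supp (sh_w a' b')" "w' \<in> supp (sh_w [(k, 1)] u)"
            by blast
          then show ?thesis
          proof cases
            case C1
            then show ?thesis using S[OF C1(2)] a b x1 by (auto simp: SPROP_def)
          next
            case C2
            have Su: "SPROP a' b' u" using S[OF C2(4)] .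
            then have pu: "pos_w u" and lu: "length u \<le> length a' + length b'" by (auto simp: SPROP_def)
            have "SPROP [(k, 1)] u w'"
              using IH[of "[(k, 1)]" u w'] C2 pu lu n a b by auto
            then show ?thesis using Su C2 a b by (auto simp: SPROP_def)
          qed
        qed
      qed
    qed
  qed
qed

lemma supp_sh_w: "pos_w a \<Longrightarrow> pos_w b \<Longrightarrow> w \<in> supp (sh_w a b :: 'k::{finite,field} vec) \<Longrightarrow> SPROP a b w"
  using supp_sh_w_aux by blast

definition LF :: "('k \<Rightarrow> 'R) \<Rightarrow> ('k word \<Rightarrow> 'R) \<Rightarrow> 'k::comm_ring_1 vec \<Rightarrow> 'R::comm_ring_1" where
  "LF h \<phi> V = (\<Sum>w\<in>supp V. h (V w) * \<phi> w)"

locale hom = fixes h :: "'k::comm_ring_1 \<Rightarrow> 'R::comm_ring_1"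
  assumes h_add: "h (x + y) = h x + h y" and h_mult: "h (x * y) = h x * h y" and h_0: "h 0 = 0" and h_1: "h 1 = 1"
begin

lemma LF_eq: "finite A \<Longrightarrow> supp V \<subseteq> A \<Longrightarrow> LF h \<phi> V = (\<Sum>w\<in>A. h (V w) * \<phi> w)"
  unfolding LF_def by (rule sum.mono_neutral_left) (auto simp: supp_def h_0)

lemma LF_add: "FS U \<Longrightarrow> FS V \<Longrightarrow> LF h \<phi> (U + V) = LF h \<phi> U + LF h \<phi> V"
proof -
  assume "FS U" "FS V"
  then have fin: "finite (supp U \<union> supp V)" by (simp add: FS_def)
  show ?thesis
    apply (subst LF_eq[OF fin], use supp_add in blast)
    apply (subst LF_eq[OF fin], blast)
    apply (subst LF_eq[OF fin], blast)
    by (simp add: h_add algebra_simps sum.distrib)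
qed

lemma LF_smul: "FS V \<Longrightarrow> LF h \<phi> (smul c V) = h c * LF h \<phi> V"
proof -
  assume "FS V"
  then have fin: "finite (supp V)" by (simp add: FS_def)
  show ?thesis
    apply (subst LF_eq[OF fin], use supp_smul in blast)
    by (simp add: LF_def smul_def h_mult sum_distrib_left algebra_simps)
qed

lemma LF_zero: "LF h \<phi> 0 = 0" by (simp add: LF_def)

lemma LF_sum: "finite I \<Longrightarrow> (\<And>i. i \<in> I \<Longrightarrow> FS (f i)) \<Longrightarrow> LF h \<phi> (\<Sum>i\<in>I. f i) = (\<Sum>i\<in>I. LF h \<phi> (f i))"
  by (induct I rule: finite_induct) (auto simp: LF_zero LF_add)

lemma LF_basis: "LF h \<phi> (basis w) = \<phi> w"
  unfolding LF_def supp_basis by (simp add: basis_def h_1)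

lemma LF_pre: "LF h \<phi> (pre l V) = LF h (\<lambda>t. \<phi> (l # t)) V"
  unfolding LF_def supp_pre by (subst sum.reindex) (auto simp: inj_on_def pre_def)

lemma LF_cong: "(\<And>w. w \<in> supp V \<Longrightarrow> \<phi> w = \<phi>' w) \<Longrightarrow> LF h \<phi> V = LF h \<phi>' V"
  unfolding LF_def by (rule sum.cong) auto

lemma LF_multl: "LF h (\<lambda>t. K * \<phi> t) V = K * LF h \<phi> V"
  unfolding LF_def by (simp add: sum_distrib_left algebra_simps)

end

interpretation h1: hom "fls_const :: 'k::comm_ring_1 \<Rightarrow> 'k fls"
  by unfold_locales (simp_all add: fls_plus_const)

interpretation h2: hom "\<lambda>c. fls_const (fls_const c) :: 'k::comm_ring_1 fls fls"
  by unfold_locales (simp_all add: fls_plus_const)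

lemma LF_nest: "LF (\<lambda>c. fls_const (fls_const c)) (\<lambda>t. fls_const (\<psi> t)) V = fls_const (LF fls_const \<psi> V)"
  by (simp add: LF_def fls_const_sum)

fun tm :: "'k word \<Rightarrow> 'k::{finite,field} fls" where
  "tm [] = 1"
| "tm [p] = P1 (fst p) + 1"
| "tm [p, q] = P1 (fst p)"
| "tm _ = 0"

definition psi :: "nat \<Rightarrow> 'k word \<Rightarrow> 'k::{finite,field} fls" where
  "psi n t = (if lab1 t \<and> pos_w t \<and> length t \<le> 2 \<and> wt t = n then tm t else 0)"

definition tau :: "nat \<Rightarrow> 'k::{finite,field} vec \<Rightarrow> 'k fls" where
  "tau n = LF fls_const (psi n)"

definition phi :: "nat \<Rightarrow> 'k \<Rightarrow> 'k word \<Rightarrow> 'k::{finite,field} fls fls" where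
  "phi s e w = (case w of [] \<Rightarrow> 0 | p # t \<Rightarrow> if snd p = e \<and> 1 \<le> fst p \<and> fst p \<le> s then S2 (fst p) * fls_const (psi (s - fst p) t) else 0)"

definition rho :: "nat \<Rightarrow> 'k \<Rightarrow> 'k::{finite,field} vec \<Rightarrow> 'k fls fls" where
  "rho s e = LF (\<lambda>c. fls_const (fls_const c)) (phi s e)"

lemma rho_pre: "1 \<le> i \<Longrightarrow> i \<le> s \<Longrightarrow> rho s e (pre (i, e) V) = S2 i * fls_const (tau (s - i) V)"
  by (simp add: rho_def tau_def h2.LF_pre phi_def h2.LF_multl LF_nest)

lemma tau_basis: "tau n (basis t) = psi n t"
  by (simp add: tau_def h1.LF_basis)

lemma P1_ge: "fls_subdegree (P1 j :: 'k::{finite,field} fls) \<ge> - int j \<or> True" by simp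

lemma tau_T0: "tau n (sh_w [] [] :: 'k::{finite,field} vec) = (if n = 0 then 1 else 0)"
  by (simp add: tau_basis psi_def)

lemma tau_T1: "1 \<le> k \<Longrightarrow> tau n (sh_w [(k, 1)] [] :: 'k::{finite,field} vec) = (if n = k then P1 k + 1 else 0)"
  by (simp add: tau_basis psi_def)

lemma tau_T1': "1 \<le> j \<Longrightarrow> tau n (sh_w [] [(j, 1)] :: 'k::{finite,field} vec) = (if n = j then P1 j + 1 else 0)"
  by (simp add: tau_basis psi_def)

lemma tau_T2:
  assumes k: "1 \<le> k" and j: "1 \<le> j"
  shows "tau n (sh_w [(k, 1)] [(j, 1)] :: 'k::{finite,field} vec) = (if n = k + j then (P1 k + 1) * (P1 j + 1) else 0)"
proof -
  have e: "sh_w [(k, 1)] [(j, 1)] = basis [(k,1),(j,1)] + basis [(j,1),(k,1)] + (basis [(k+j,1)]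
      + (\<Sum>m\<in>{1..<k+j}. smul (Delta k j m) (basis [(k+j-m,1),(m,1)])) :: 'k vec)"
    by (simp add: dm_step_def)
  have "tau n (sh_w [(k, 1)] [(j, 1)] :: 'k vec) = psi n [(k,1),(j,1)] + psi n [(j,1),(k,1)] + (psi n [(k+j,1)]
      + (\<Sum>m\<in>{1..<k+j}. fls_const (Delta k j m) * psi n [(k+j-m,1),(m,1)]))"
    unfolding e tau_def
    by (simp add: h1.LF_add h1.LF_sum h1.LF_smul h1.LF_basis)
  also have "\<dots> = (if n = k + j then P1 k + P1 j + (P1 (k + j) + 1 + (\<Sum>m\<in>{1..<k+j}. fls_const (Delta k j m) * P1 (k + j - m))) else 0)"
    using k j by (auto simp: psi_def intro!: sum.neutral sum.cong)
  also have "\<dots> = (if n = k + j then (P1 k + 1) * (P1 j + 1) else 0)"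
  proof -
    have "(P1 k + 1) * (P1 j + 1) = P1 k * P1 j + P1 k + P1 j + (1::'k fls)"
      by (simp add: distrib_left distrib_right)
    also have "\<dots> = P1 k + P1 j + (P1 (k + j) + 1 + (\<Sum>m\<in>{1..<k+j}. fls_const (Delta k j m) * P1 (k + j - m)))"
      by (subst chen1[OF k j]) (simp add: algebra_simps)
    finally show ?thesis by simp
  qed
  finally show ?thesis .
qed

definition RT :: "'k::one word \<Rightarrow> bool" where "RT r \<longleftrightarrow> r = [] \<or> (\<exists>j. 1 \<le> j \<and> r = [(j, 1)])"

lemma tau_T:
  assumes k: "1 \<le> k" and r: "RT r"
  shows "tau (k + wt r) (sh_w [(k, 1)] r :: 'k::{finite,field} vec) = (P1 k + 1) * tm r"
  using r unfolding RT_def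
proof
  assume "r = []" then show ?thesis using tau_T1[OF k, of k] by simp
next
  assume "\<exists>j. 1 \<le> j \<and> r = [(j, 1)]"
  then obtain j where j: "1 \<le> j" "r = [(j, 1)]" by blast
  then show ?thesis using tau_T2[OF k j(1), of "k + j"] by simp
qed

lemma tau_B:
  assumes r: "RT r"
  shows "tau (wt r) (sh_w [] r :: 'k::{finite,field} vec) = tm r"
  using r unfolding RT_def by (auto simp: tau_basis psi_def)

lemma rho_U:
  fixes lam gam e :: "'k::{finite,field}"
  assumes i: "1 \<le> i" and c: "1 \<le> c" and e: "lam * gam = e" and r: "RT r" and s: "i + c + wt r = s"
  shows "rho s e (DSg (i, lam) (c, gam) (\<lambda>m t. pre m (sh_w t r))) = S2 i * S2 c * fls_const (tm r)"
proof -
  have "rho s e (DSg (i, lam) (c, gam) (\<lambda>m t. pre m (sh_w t r))) =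
     rho s e (pre (i + c, e) (sh_w [] r)) + (\<Sum>k\<in>{1..<i+c}. fls_const (fls_const (Delta i c k)) * rho s e (pre (i + c - k, e) (sh_w [(k, 1)] r)))"
    by (simp add: DSg_def e rho_def h2.LF_add h2.LF_sum h2.LF_smul)
  also have "rho s e (pre (i + c, e) (sh_w [] r)) = S2 (i + c) * fls_const (tm r)"
  proof -
    have "s - (i + c) = wt r" using s by simp
    then show ?thesis using i s rho_pre[of "i + c" s e "sh_w [] r"] tau_B[OF r] by simp
  qed
  also have "(\<Sum>k\<in>{1..<i+c}. fls_const (fls_const (Delta i c k)) * rho s e (pre (i + c - k, e) (sh_w [(k, 1)] r)))
     = (\<Sum>k\<in>{1..<i+c}. fls_const (fls_const (Delta i c k) * (P1 k + 1)) * S2 (i + c - k)) * fls_const (tm r)"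
    unfolding sum_distrib_right
  proof (intro sum.cong refl)
    fix k assume k: "k \<in> {1..<i+c}"
    have sk: "s - (i + c - k) = k + wt r" using k s by auto
    have "rho s e (pre (i + c - k, e) (sh_w [(k, 1)] r)) = S2 (i + c - k) * fls_const ((P1 k + 1) * tm r)"
    proof -
      have k1: "1 \<le> i + c - k" "i + c - k \<le> s" using k s by auto
      show ?thesis using rho_pre[OF k1, of e "sh_w [(k, 1)] r"] tau_T[OF _ r, of k] k by (simp add: sk)
    qed
    then show "fls_const (fls_const (Delta i c k)) * rho s e (pre (i + c - k, e) (sh_w [(k, 1)] r)) =
       fls_const (fls_const (Delta i c k) * (P1 k + 1)) * S2 (i + c - k) * fls_const (tm r)"
      by (simp add: fls_const_mult_const[symmetric] del: fls_const_mult_const)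
  qed
  also have "S2 (i + c) * fls_const (tm r) + (\<Sum>k\<in>{1..<i+c}. fls_const (fls_const (Delta i c k) * (P1 k + 1)) * S2 (i + c - k)) * fls_const (tm r)
     = (S2 (i + c) + (\<Sum>k\<in>{1..<i+c}. fls_const (fls_const (Delta i c k) * (P1 k + 1)) * S2 (i + c - k))) * fls_const (tm r)"
    by (simp add: distrib_right)
  also have "\<dots> = S2 i * S2 c * fls_const (tm r)" by (simp add: chen2[OF i c])
  finally show ?thesis .
qed

lemma RT_simps[simp]: "RT []" "1 \<le> j \<Longrightarrow> RT [(j, 1)]" by (auto simp: RT_def)

definition LHS_LI :: "'k letter \<Rightarrow> 'k letter \<Rightarrow> 'k letter \<Rightarrow> 'k::{finite,field} vec" where
  "LHS_LI x y z = DSg x y (\<lambda>l r. DSg l z (\<lambda>m t. pre m (sh_w t r)))"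
definition RHS_LI :: "'k letter \<Rightarrow> 'k letter \<Rightarrow> 'k letter \<Rightarrow> 'k::{finite,field} vec" where
  "RHS_LI x y z = DSg y z (\<lambda>l t. DSg x l (\<lambda>m t'. pre m (sh_w t' t)))"

lemma rho_LHS:
  fixes \<alpha> \<beta> \<gamma> :: "'k::{finite,field}"
  assumes a: "1 \<le> a" and b: "1 \<le> b" and c: "1 \<le> c"
  shows "rho (a + b + c) (\<alpha> * \<beta> * \<gamma>) (LHS_LI (a, \<alpha>) (b, \<beta>) (c, \<gamma>)) = S2 a * S2 b * S2 c"
proof -
  let ?s = "a + b + c" and ?e = "\<alpha> * \<beta> * \<gamma>"
  have "rho ?s ?e (LHS_LI (a, \<alpha>) (b, \<beta>) (c, \<gamma>)) =
     rho ?s ?e (DSg (a + b, \<alpha> * \<beta>) (c, \<gamma>) (\<lambda>m t. pre m (sh_w t []))) +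
     (\<Sum>j\<in>{1..<a+b}. fls_const (fls_const (Delta a b j)) * rho ?s ?e (DSg (a + b - j, \<alpha> * \<beta>) (c, \<gamma>) (\<lambda>m t. pre m (sh_w t [(j, 1)]))))"
    by (simp add: LHS_LI_def DSg_def[of "(a, \<alpha>)"] rho_def h2.LF_add h2.LF_sum h2.LF_smul)
  also have "rho ?s ?e (DSg (a + b, \<alpha> * \<beta>) (c, \<gamma>) (\<lambda>m t. pre m (sh_w t []))) = S2 (a + b) * S2 c"
    using rho_U[of "a + b" c "\<alpha> * \<beta>" \<gamma> ?e "[]" ?s] a c by simp
  also have "(\<Sum>j\<in>{1..<a+b}. fls_const (fls_const (Delta a b j)) * rho ?s ?e (DSg (a + b - j, \<alpha> * \<beta>) (c, \<gamma>) (\<lambda>m t. pre m (sh_w t [(j, 1)]))))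
      = (\<Sum>j\<in>{1..<a+b}. fls_const (fls_const (Delta a b j) * (P1 j + 1)) * S2 (a + b - j)) * S2 c"
    unfolding sum_distrib_right
  proof (intro sum.cong refl)
    fix j assume j: "j \<in> {1..<a+b}"
    have "rho ?s ?e (DSg (a + b - j, \<alpha> * \<beta>) (c, \<gamma>) (\<lambda>m t. pre m (sh_w t [(j, 1)]))) = S2 (a + b - j) * S2 c * fls_const (P1 j + 1)"
      using rho_U[of "a + b - j" c "\<alpha> * \<beta>" \<gamma> ?e "[(j, 1)]" ?s] j c by (simp add: le_diff_conv2)
    then show "fls_const (fls_const (Delta a b j)) * rho ?s ?e (DSg (a + b - j, \<alpha> * \<beta>) (c, \<gamma>) (\<lambda>m t. pre m (sh_w t [(j, 1)]))) =
        fls_const (fls_const (Delta a b j) * (P1 j + 1)) * S2 (a + b - j) * S2 c"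
      by (simp add: fls_const_mult_const[symmetric] del: fls_const_mult_const)
  qed
  also have "S2 (a + b) * S2 c + (\<Sum>j\<in>{1..<a+b}. fls_const (fls_const (Delta a b j) * (P1 j + 1)) * S2 (a + b - j)) * S2 c
      = S2 a * S2 b * S2 c"
    by (simp add: chen2[OF a b] distrib_right)
  finally show ?thesis .
qed

lemma rho_RHS:
  fixes \<alpha> \<beta> \<gamma> :: "'k::{finite,field}"
  assumes a: "1 \<le> a" and b: "1 \<le> b" and c: "1 \<le> c"
  shows "rho (a + b + c) (\<alpha> * \<beta> * \<gamma>) (RHS_LI (a, \<alpha>) (b, \<beta>) (c, \<gamma>)) = S2 a * S2 b * S2 c"
proof -
  let ?s = "a + b + c" and ?e = "\<alpha> * \<beta> * \<gamma>"
  have "rho ?s ?e (RHS_LI (a, \<alpha>) (b, \<beta>) (c, \<gamma>)) =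
     rho ?s ?e (DSg (a, \<alpha>) (b + c, \<beta> * \<gamma>) (\<lambda>m t'. pre m (sh_w t' []))) +
     (\<Sum>j\<in>{1..<b+c}. fls_const (fls_const (Delta b c j)) * rho ?s ?e (DSg (a, \<alpha>) (b + c - j, \<beta> * \<gamma>) (\<lambda>m t'. pre m (sh_w t' [(j, 1)]))))"
    by (simp add: RHS_LI_def DSg_def[of "(b, \<beta>)"] rho_def h2.LF_add h2.LF_sum h2.LF_smul)
  also have "rho ?s ?e (DSg (a, \<alpha>) (b + c, \<beta> * \<gamma>) (\<lambda>m t'. pre m (sh_w t' []))) = S2 a * S2 (b + c)"
    using rho_U[of a "b + c" \<alpha> "\<beta> * \<gamma>" ?e "[]" ?s] a b by (simp add: mult.assoc add.assoc)
  also have "(\<Sum>j\<in>{1..<b+c}. fls_const (fls_const (Delta b c j)) * rho ?s ?e (DSg (a, \<alpha>) (b + c - j, \<beta> * \<gamma>) (\<lambda>m t'. pre m (sh_w t' [(j, 1)]))))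
      = S2 a * (\<Sum>j\<in>{1..<b+c}. fls_const (fls_const (Delta b c j) * (P1 j + 1)) * S2 (b + c - j))"
    unfolding sum_distrib_left
  proof (intro sum.cong refl)
    fix j assume j: "j \<in> {1..<b+c}"
    have "rho ?s ?e (DSg (a, \<alpha>) (b + c - j, \<beta> * \<gamma>) (\<lambda>m t'. pre m (sh_w t' [(j, 1)]))) = S2 a * S2 (b + c - j) * fls_const (P1 j + 1)"
      using rho_U[of a "b + c - j" \<alpha> "\<beta> * \<gamma>" ?e "[(j, 1)]" ?s] j a by (simp add: mult.assoc le_diff_conv2)
    then show "fls_const (fls_const (Delta b c j)) * rho ?s ?e (DSg (a, \<alpha>) (b + c - j, \<beta> * \<gamma>) (\<lambda>m t'. pre m (sh_w t' [(j, 1)]))) =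
        S2 a * (fls_const (fls_const (Delta b c j) * (P1 j + 1)) * S2 (b + c - j))"
      by (simp add: fls_const_mult_const[symmetric] del: fls_const_mult_const)
  qed
  also have "S2 a * S2 (b + c) + S2 a * (\<Sum>j\<in>{1..<b+c}. fls_const (fls_const (Delta b c j) * (P1 j + 1)) * S2 (b + c - j))
      = S2 a * S2 b * S2 c"
    by (simp add: chen2[OF b c] distrib_left mult.assoc)
  finally show ?thesis .
qed

definition Good :: "nat \<Rightarrow> 'k \<Rightarrow> 'k::{finite,field} word \<Rightarrow> bool" where
  "Good s e w \<longleftrightarrow> (\<exists>i t. w = (i, e) # t \<and> 1 \<le> i \<and> i \<le> s \<and> lab1 t \<and> pos_w t \<and> length t \<le> 2 \<and> i + wt t = s)"

lemma in_supp_DSg: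
  assumes "w \<in> supp (DSg (a, \<alpha>) (b, \<beta>) H)"
  shows "w \<in> supp (H (a + b, \<alpha> * \<beta>) []) \<or> (\<exists>k\<in>{1..<a+b}. w \<in> supp (H (a + b - k, \<alpha> * \<beta>) [(k, 1)]))"
  using assms unfolding DSg_def
  by (auto dest!: in_supp_add in_supp_sum[OF finite_atLeastLessThan] in_supp_smul)

lemma RT_props: "RT r \<Longrightarrow> lab1 r \<and> pos_w r \<and> length r \<le> 1"
  by (auto simp: RT_def)

lemma supp_U:
  fixes lam gam e :: "'k::{finite,field}"
  assumes i: "1 \<le> i" and c: "1 \<le> c" and e: "lam * gam = e" and r: "RT r" and s: "i + c + wt r = s"
    and w: "w \<in> supp (DSg (i, lam) (c, gam) (\<lambda>m t. pre m (sh_w t r)))"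
  shows "Good s e w"
proof -
  have rp: "lab1 r" "pos_w r" "length r \<le> 1" using RT_props[OF r] by auto
  from in_supp_DSg[OF w] show ?thesis
  proof
    assume "w \<in> supp (pre (i + c, lam * gam) (sh_w [] r))"
    then have "w = (i + c, e) # r" using e by (auto dest!: in_supp_pre in_supp_basis)
    then show ?thesis using rp s i unfolding Good_def by auto
  next
    assume "\<exists>k\<in>{1..<i+c}. w \<in> supp (pre (i + c - k, lam * gam) (sh_w [(k, 1)] r))"
    then obtain k w' where k: "k \<in> {1..<i+c}" and w': "w = (i + c - k, e) # w'" "w' \<in> supp (sh_w [(k, 1)] r :: 'k vec)"
      using e by (auto dest!: in_supp_pre)
    have "SPROP [(k, 1)] r w'" by (rule supp_sh_w) (use k rp w' in auto)
    then show ?thesis using w' k rp s unfolding Good_def SPROP_def by auto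
  qed
qed

lemma supp_LHS:
  fixes \<alpha> \<beta> \<gamma> :: "'k::{finite,field}"
  assumes a: "1 \<le> a" and b: "1 \<le> b" and c: "1 \<le> c"
    and w: "w \<in> supp (LHS_LI (a, \<alpha>) (b, \<beta>) (c, \<gamma>))"
  shows "Good (a + b + c) (\<alpha> * \<beta> * \<gamma>) w"
  using in_supp_DSg[OF w[unfolded LHS_LI_def]]
proof
  assume "w \<in> supp (DSg (a + b, \<alpha> * \<beta>) (c, \<gamma>) (\<lambda>m t. pre m (sh_w t [])))"
  then show ?thesis by (rule supp_U[rotated 5]) (use a c in auto)
next
  assume "\<exists>k\<in>{1..<a+b}. w \<in> supp (DSg (a + b - k, \<alpha> * \<beta>) (c, \<gamma>) (\<lambda>m t. pre m (sh_w t [(k, 1)])))"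
  then obtain k where k: "k \<in> {1..<a+b}" "w \<in> supp (DSg (a + b - k, \<alpha> * \<beta>) (c, \<gamma>) (\<lambda>m t. pre m (sh_w t [(k, 1)])))" by blast
  show ?thesis by (rule supp_U[OF _ _ _ _ _ k(2)]) (use k c in auto)
qed

lemma supp_RHS:
  fixes \<alpha> \<beta> \<gamma> :: "'k::{finite,field}"
  assumes a: "1 \<le> a" and b: "1 \<le> b" and c: "1 \<le> c"
    and w: "w \<in> supp (RHS_LI (a, \<alpha>) (b, \<beta>) (c, \<gamma>))"
  shows "Good (a + b + c) (\<alpha> * \<beta> * \<gamma>) w"
  using in_supp_DSg[OF w[unfolded RHS_LI_def]]
proof
  assume "w \<in> supp (DSg (a, \<alpha>) (b + c, \<beta> * \<gamma>) (\<lambda>m t'. pre m (sh_w t' [])))"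
  then show ?thesis by (rule supp_U[rotated 5]) (use a b in \<open>auto simp: mult.assoc\<close>)
next
  assume "\<exists>k\<in>{1..<b+c}. w \<in> supp (DSg (a, \<alpha>) (b + c - k, \<beta> * \<gamma>) (\<lambda>m t'. pre m (sh_w t' [(k, 1)])))"
  then obtain k where k: "k \<in> {1..<b+c}" "w \<in> supp (DSg (a, \<alpha>) (b + c - k, \<beta> * \<gamma>) (\<lambda>m t'. pre m (sh_w t' [(k, 1)])))" by blast
  show ?thesis by (rule supp_U[OF _ _ _ _ _ k(2)]) (use k a in \<open>auto simp: mult.assoc\<close>)
qed

lemma sum_single: "finite A \<Longrightarrow> a \<in> A \<Longrightarrow> (\<And>x. x \<in> A \<Longrightarrow> x \<noteq> a \<Longrightarrow> f x = 0) \<Longrightarrow> sum f A = f a"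
  by (simp add: sum.remove sum.neutral)

lemma P1_nth: "1 \<le> n \<Longrightarrow> (P1 j :: 'k::{finite,field} fls) $$ (- int n) = (if n = j then 1 else 0)"
  by (rule PP_nth) auto

lemma S2_nth: "1 \<le> n \<Longrightarrow> (S2 j :: 'k::{finite,field} fls fls) $$ (- int n) = (if n = j then 1 else 0)"
  by (rule PP_nth) (auto simp: W2_props)

lemma short_cases: "lab1 t \<Longrightarrow> length t \<le> 2 \<Longrightarrow> t = [] \<or> (\<exists>j. t = [(j, 1)]) \<or> (\<exists>j k. t = [(j, 1), (k, 1)])"
  by (cases t rule: remdups_adj.cases) (auto simp: prod_eq_iff)

lemma tm_nth:
  assumes "1 \<le> n" "lab1 t" "length t \<le> 2"
  shows "(tm t :: 'k::{finite,field} fls) $$ (- int n) = (if t \<noteq> [] \<and> fst (hd t) = n then 1 else 0)"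
  using short_cases[OF assms(2,3)] assms(1) by (auto simp: P1_nth)

lemma rho_coef:
  fixes V :: "'k::{finite,field} vec"
  assumes fin: "FS V" and G: "\<And>w. w \<in> supp V \<Longrightarrow> Good s e w" and m: "1 \<le> m"
  shows "(rho s e V) $$ (- int m) = (\<Sum>w\<in>supp V. fls_const (V w) * (if fst (hd w) = m then tm (tl w) else 0))"
proof -
  have "(rho s e V) $$ (- int m) = (\<Sum>w\<in>supp V. (fls_const (fls_const (V w)) * phi s e w) $$ (- int m))"
    by (simp add: rho_def LF_def fls_nth_sum)
  also have "\<dots> = (\<Sum>w\<in>supp V. fls_const (V w) * (if fst (hd w) = m then tm (tl w) else 0))"
  proof (intro sum.cong refl)
    fix w assume "w \<in> supp V"
    then obtain i t where w: "w = (i, e) # t" "1 \<le> i" "i \<le> s" "lab1 t" "pos_w t" "length t \<le> 2" "i + wt t = s"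
      using G unfolding Good_def by blast
    have "phi s e w = S2 i * fls_const (tm t)"
      using w by (simp add: phi_def psi_def)
    then show "(fls_const (fls_const (V w)) * phi s e w) $$ (- int m) = fls_const (V w) * (if fst (hd w) = m then tm (tl w) else 0)"
      using w m by (simp add: S2_nth mult.assoc)
  qed
  finally show ?thesis .
qed

lemma wt0: "pos_w t \<Longrightarrow> wt t = 0 \<Longrightarrow> t = []"
  by (cases t) auto

lemma rho_inj:
  fixes V :: "'k::{finite,field} vec"
  assumes fin: "FS V" and G: "\<And>w. w \<in> supp V \<Longrightarrow> Good s e w" and z: "rho s e V = 0"
  shows "V = 0"
proof (rule ccontr)
  assume "V \<noteq> 0"
  then obtain w0 where w0s: "w0 \<in> supp V" by (auto simp: supp_def fun_eq_iff)
  obtain i0 t0 where w0: "w0 = (i0, e) # t0" "1 \<le> i0" "i0 \<le> s" "lab1 t0" "pos_w t0" "length t0 \<le> 2" "i0 + wt t0 = s"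
    using G[OF w0s] unfolding Good_def by blast
  have finS: "finite (supp V)" using fin by (simp add: FS_def)
  have C: "(\<Sum>w\<in>supp V. fls_const (V w) * (if fst (hd w) = i0 then tm (tl w) else 0)) = 0"
    using rho_coef[OF fin G w0(2)] z by simp
  show False
  proof (cases "t0 = []")
    case True
    have "(\<Sum>w\<in>supp V. fls_const (V w) * (if fst (hd w) = i0 then tm (tl w) else 0)) = fls_const (V w0) * (if fst (hd w0) = i0 then tm (tl w0) else 0)"
    proof (rule sum_single[OF finS w0s])
      fix w assume ws: "w \<in> supp V" and ne: "w \<noteq> w0"
      obtain i t where w: "w = (i, e) # t" "pos_w t" "i + wt t = s" using G[OF ws] unfolding Good_def by blast
      show "fls_const (V w) * (if fst (hd w) = i0 then tm (tl w) else 0) = 0"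
      proof (cases "i = i0")
        case True
        then have "wt t = 0" using w w0 \<open>t0 = []\<close> by simp
        then have "t = []" using w wt0 by blast
        then show ?thesis using ne w w0 True \<open>t0 = []\<close> by simp
      qed (use w in simp)
    qed
    also have "\<dots> = fls_const (V w0)" using w0 True by simp
    finally have "fls_const (V w0) = 0" using C True by simp
    then show False using w0s by (simp add: supp_def)
  next
    case False
    then obtain n rest where t0: "t0 = (n, 1) # rest" using w0(4) by (cases t0) auto
    have n1: "1 \<le> n" using w0(5) t0 by simp
    have D: "(\<Sum>w\<in>supp V. V w * ((if fst (hd w) = i0 then tm (tl w) else 0) $$ (- int n))) = 0"
      using arg_cong[OF C, of "\<lambda>F. F $$ (- int n)"] by (simp add: fls_nth_sum)
    have "(\<Sum>w\<in>supp V. V w * ((if fst (hd w) = i0 then tm (tl w) else 0) $$ (- int n))) = V w0"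
    proof -
      have "(\<Sum>w\<in>supp V. V w * ((if fst (hd w) = i0 then tm (tl w) else 0) $$ (- int n))) =
          V w0 * ((if fst (hd w0) = i0 then tm (tl w0) else 0) $$ (- int n))"
      proof (rule sum_single[OF finS w0s])
        fix w assume ws: "w \<in> supp V" and ne: "w \<noteq> w0"
        obtain i t where w: "w = (i, e) # t" "lab1 t" "pos_w t" "length t \<le> 2" "i + wt t = s"
          using G[OF ws] unfolding Good_def by blast
        show "V w * ((if fst (hd w) = i0 then tm (tl w) else 0) $$ (- int n)) = 0"
        proof (cases "i = i0 \<and> t \<noteq> [] \<and> fst (hd t) = n")
          case True
          then obtain rest' where t: "t = (n, 1) # rest'" using w(2) by (cases t) auto
          have wr: "wt rest' = wt rest" using w(5) w0(7) t t0 True by simp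
          have "rest' = rest"
          proof -
            have r1: "lab1 rest'" "pos_w rest'" "length rest' \<le> 1" using w t by auto
            have r2: "lab1 rest" "pos_w rest" "length rest \<le> 1" using w0 t0 by auto
            show ?thesis
            proof (cases rest')
              case Nil
              then have "wt rest = 0" using wr by simp
              then show ?thesis using wt0[OF r2(2)] Nil by simp
            next
              case (Cons p1 q1)
              then have q1: "q1 = []" using r1 by simp
              show ?thesis
              proof (cases rest)
                case Nil
                then have "wt rest' = 0" using wr by simp
                then show ?thesis using wt0[OF r1(2)] Nil by simp
              next
                case (Cons p2 q2)
                then have "q2 = []" using r2 by simp
                then show ?thesis using Cons \<open>rest' = p1 # q1\<close> q1 wr r1 r2 by (auto simp: prod_eq_iff)
              qed
            qed
          qed
          then have "w = w0" using w t w0 t0 True by simp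
          then show ?thesis using ne by simp
        next
          case False
          then show ?thesis using w n1 by (auto simp: tm_nth)
        qed
      qed
      also have "\<dots> = V w0" using w0 t0 n1 by (simp add: tm_nth)
      finally show ?thesis .
    qed
    then have "V w0 = 0" using D by simp
    then show False using w0s by (simp add: supp_def)
  qed
qed

lemma rho_diff: "FS U \<Longrightarrow> FS V \<Longrightarrow> rho s e (U + smul (-1) V) = rho s e U - rho s e (V :: 'k::{finite,field} vec)"
  by (simp add: rho_def h2.LF_add h2.LF_smul fls_const_uminus)

lemma LI:
  fixes x y z :: "'k::{finite,field} letter"
  assumes "1 \<le> fst x" "1 \<le> fst y" "1 \<le> fst z"
  shows "LHS_LI x y z = RHS_LI x y z"
proof -
  obtain a \<alpha> b \<beta> c \<gamma> where xyz: "x = (a, \<alpha>)" "y = (b, \<beta>)" "z = (c, \<gamma>)" by (cases x, cases y, cases z)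
  have a: "1 \<le> a" and b: "1 \<le> b" and c: "1 \<le> c" using assms xyz by auto
  let ?L = "LHS_LI x y z" and ?R = "RHS_LI x y z"
  let ?D = "?L + smul (-1) ?R"
  have fL: "FS ?L" and fR: "FS ?R" by (auto simp: LHS_LI_def RHS_LI_def)
  have "?D = 0"
  proof (rule rho_inj[where s = "a + b + c" and e = "\<alpha> * \<beta> * \<gamma>"])
    show "FS ?D" using fL fR by simp
    fix w assume "w \<in> supp ?D"
    then have "w \<in> supp ?L \<or> w \<in> supp ?R" by (auto dest!: in_supp_add in_supp_smul)
    then show "Good (a + b + c) (\<alpha> * \<beta> * \<gamma>) w"
      using supp_LHS[OF a b c] supp_RHS[OF a b c] xyz by auto
  next
    have l: "rho (a + b + c) (\<alpha> * \<beta> * \<gamma>) ?L = S2 a * S2 b * S2 c" unfolding xyz by (rule rho_LHS[OF a b c])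
    have r: "rho (a + b + c) (\<alpha> * \<beta> * \<gamma>) ?R = S2 a * S2 b * S2 c" unfolding xyz by (rule rho_RHS[OF a b c])
    show "rho (a + b + c) (\<alpha> * \<beta> * \<gamma>) ?D = 0"
      using rho_diff[OF fL fR] l r by simp
  qed
  show ?thesis
  proof (rule ext)
    fix w
    have "?D w = 0" using \<open>?D = 0\<close> by simp
    then show "?L w = ?R w" by (simp add: smul_def)
  qed
qed

lemma expand_L:
  fixes x y z :: "'k::{finite,field} letter"
  shows "shuffle (sh_w (x # a') (y # b')) (basis (z # c')) =
    pre x (shuffle (sh_w a' (y # b')) (basis (z # c'))) + pre y (shuffle (sh_w (x # a') b') (basis (z # c')))
  + pre z (shuffle (sh_w (x # a') (y # b')) (basis c'))
  + dm_step x z (shuffle (sh_w a' (y # b')) (basis c')) + dm_step y z (shuffle (sh_w (x # a') b') (basis c'))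
  + DSg x y (\<lambda>l r. pre l (shuffle (shuffle (basis r) (sh_w a' b')) (basis (z # c'))))
  + DSg x y (\<lambda>l r. dm_step l z (shuffle (shuffle (basis r) (sh_w a' b')) (basis c')))"
proof -
  let ?S = "sh_w a' b' :: 'k vec"
  let ?V1 = "sh_w a' (y # b') :: 'k vec" and ?V2 = "sh_w (x # a') b' :: 'k vec"
  let ?C = "basis c' :: 'k vec"
  have bc: "basis (z # c') = pre z ?C" by simp
  have e1: "sh_w (x # a') (y # b') = pre x ?V1 + pre y ?V2 + dm_step x y ?S" by simp
  have L0: "shuffle (sh_w (x # a') (y # b')) (basis (z # c')) =
      shuffle (pre x ?V1) (pre z ?C) + shuffle (pre y ?V2) (pre z ?C) + shuffle (dm_step x y ?S) (pre z ?C)"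
    unfolding e1 bc by (simp add: sh_add1)
  have h1: "shuffle (pre x ?V1) (pre z ?C) = pre x (shuffle ?V1 (basis (z # c'))) + pre z (shuffle (pre x ?V1) ?C) + dm_step x z (shuffle ?V1 ?C)"
    by (simp add: sh_rec[of ?V1 ?C x z, simplified])
  have h2: "shuffle (pre y ?V2) (pre z ?C) = pre y (shuffle ?V2 (basis (z # c'))) + pre z (shuffle (pre y ?V2) ?C) + dm_step y z (shuffle ?V2 ?C)"
    by (simp add: sh_rec[of ?V2 ?C y z, simplified])
  have h3: "shuffle (dm_step x y ?S) (pre z ?C) =
      DSg x y (\<lambda>l r. pre l (shuffle (shuffle (basis r) ?S) (basis (z # c'))))
    + pre z (shuffle (dm_step x y ?S) ?C)
    + DSg x y (\<lambda>l r. dm_step l z (shuffle (shuffle (basis r) ?S) ?C))"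
  proof -
    have "shuffle (dm_step x y ?S) (pre z ?C) = DSg x y (\<lambda>l r. shuffle (pre l (shuffle (basis r) ?S)) (pre z ?C))"
      unfolding dm_step_DSg[OF FS_sh_w]
      by (rule DSg_linF[OF linF_sh1]) auto
    also have "\<dots> = DSg x y (\<lambda>l r. pre l (shuffle (shuffle (basis r) ?S) (basis (z # c'))) + pre z (shuffle (pre l (shuffle (basis r) ?S)) ?C)
         + dm_step l z (shuffle (shuffle (basis r) ?S) ?C))"
      by (subst sh_rec) auto
    also have "\<dots> = DSg x y (\<lambda>l r. pre l (shuffle (shuffle (basis r) ?S) (basis (z # c'))))
         + DSg x y (\<lambda>l r. pre z (shuffle (pre l (shuffle (basis r) ?S)) ?C))
         + DSg x y (\<lambda>l r. dm_step l z (shuffle (shuffle (basis r) ?S) ?C))"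
      by (simp only: DSg_add)
    also have "DSg x y (\<lambda>l r. pre z (shuffle (pre l (shuffle (basis r) ?S)) ?C)) = pre z (shuffle (dm_step x y ?S) ?C)"
      unfolding dm_step_DSg[OF FS_sh_w]
      by (rule DSg_linF[symmetric, OF linF_comp[OF linF_pre linF_sh1]]) auto
    finally show ?thesis .
  qed
  have hz: "pre z (shuffle (sh_w (x # a') (y # b')) ?C) = pre z (shuffle (pre x ?V1) ?C) + pre z (shuffle (pre y ?V2) ?C) + pre z (shuffle (dm_step x y ?S) ?C)"
    unfolding e1 by (simp add: sh_add1 pre_add)
  show ?thesis unfolding L0 h1 h2 h3 hz by (simp only: ac_simps)
qed


lemma expand_R:
  fixes x y z :: "'k::{finite,field} letter"
  shows "shuffle (basis (x # a')) (sh_w (y # b') (z # c')) =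
    pre x (shuffle (basis a') (sh_w (y # b') (z # c'))) + pre y (shuffle (basis (x # a')) (sh_w b' (z # c')))
  + pre z (shuffle (basis (x # a')) (sh_w (y # b') c'))
  + dm_step x y (shuffle (basis a') (sh_w b' (z # c'))) + dm_step x z (shuffle (basis a') (sh_w (y # b') c'))
  + DSg y z (\<lambda>m t. pre m (shuffle (basis (x # a')) (shuffle (basis t) (sh_w b' c'))))
  + DSg y z (\<lambda>m t. dm_step x m (shuffle (basis a') (shuffle (basis t) (sh_w b' c'))))"
proof -
  let ?T = "sh_w b' c' :: 'k vec"
  let ?W1 = "sh_w b' (z # c') :: 'k vec" and ?W2 = "sh_w (y # b') c' :: 'k vec"
  let ?A = "basis a' :: 'k vec"
  have ba: "basis (x # a') = pre x ?A" by simp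
  have e1: "sh_w (y # b') (z # c') = pre y ?W1 + pre z ?W2 + dm_step y z ?T" by simp
  have R0: "shuffle (basis (x # a')) (sh_w (y # b') (z # c')) =
      shuffle (pre x ?A) (pre y ?W1) + shuffle (pre x ?A) (pre z ?W2) + shuffle (pre x ?A) (dm_step y z ?T)"
    unfolding e1 ba by (simp add: sh_add2)
  have k1: "shuffle (pre x ?A) (pre y ?W1) = pre x (shuffle ?A (pre y ?W1)) + pre y (shuffle (basis (x # a')) ?W1) + dm_step x y (shuffle ?A ?W1)"
    by (simp add: sh_rec[of ?A ?W1 x y, simplified])
  have k2: "shuffle (pre x ?A) (pre z ?W2) = pre x (shuffle ?A (pre z ?W2)) + pre z (shuffle (basis (x # a')) ?W2) + dm_step x z (shuffle ?A ?W2)"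
    by (simp add: sh_rec[of ?A ?W2 x z, simplified])
  have k3: "shuffle (pre x ?A) (dm_step y z ?T) =
      pre x (shuffle ?A (dm_step y z ?T))
    + DSg y z (\<lambda>m t. pre m (shuffle (basis (x # a')) (shuffle (basis t) ?T)))
    + DSg y z (\<lambda>m t. dm_step x m (shuffle ?A (shuffle (basis t) ?T)))"
  proof -
    have "shuffle (pre x ?A) (dm_step y z ?T) = DSg y z (\<lambda>m t. shuffle (pre x ?A) (pre m (shuffle (basis t) ?T)))"
      unfolding dm_step_DSg[OF FS_sh_w]
      by (rule DSg_linF[OF linF_sh2]) auto
    also have "\<dots> = DSg y z (\<lambda>m t. pre x (shuffle ?A (pre m (shuffle (basis t) ?T))) + pre m (shuffle (basis (x # a')) (shuffle (basis t) ?T))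
         + dm_step x m (shuffle ?A (shuffle (basis t) ?T)))"
      by (subst sh_rec) auto
    also have "\<dots> = DSg y z (\<lambda>m t. pre x (shuffle ?A (pre m (shuffle (basis t) ?T))))
         + DSg y z (\<lambda>m t. pre m (shuffle (basis (x # a')) (shuffle (basis t) ?T)))
         + DSg y z (\<lambda>m t. dm_step x m (shuffle ?A (shuffle (basis t) ?T)))"
      by (simp only: DSg_add)
    also have "DSg y z (\<lambda>m t. pre x (shuffle ?A (pre m (shuffle (basis t) ?T)))) = pre x (shuffle ?A (dm_step y z ?T))"
      unfolding dm_step_DSg[OF FS_sh_w]
      by (rule DSg_linF[symmetric, OF linF_comp[OF linF_pre linF_sh2]]) auto
    finally show ?thesis .
  qed
  have hx: "pre x (shuffle ?A (sh_w (y # b') (z # c'))) = pre x (shuffle ?A (pre y ?W1)) + pre x (shuffle ?A (pre z ?W2)) + pre x (shuffle ?A (dm_step y z ?T))"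
    unfolding e1 by (simp add: sh_add2 pre_add)
  show ?thesis unfolding R0 k1 k2 k3 hx by (simp only: ac_simps)
qed

definition posV :: "'k::comm_ring_1 vec \<Rightarrow> bool" where "posV A \<longleftrightarrow> (\<forall>w\<in>supp A. pos_w w)"
definition LB :: "nat \<Rightarrow> 'k::comm_ring_1 vec \<Rightarrow> bool" where "LB n A \<longleftrightarrow> (\<forall>w\<in>supp A. length w \<le> n)"
definition OK :: "nat \<Rightarrow> 'k::comm_ring_1 vec \<Rightarrow> bool" where "OK n A \<longleftrightarrow> FS A \<and> posV A \<and> LB n A"

lemma OK_basis: "pos_w a \<Longrightarrow> length a \<le> n \<Longrightarrow> OK n (basis a :: 'k::comm_ring_1 vec)"
  by (simp add: OK_def posV_def LB_def supp_basis)

lemma OK_FS: "OK n A \<Longrightarrow> FS A" by (simp add: OK_def)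

lemma OK_shuffle:
  assumes "OK p A" "OK q B"
  shows "OK (p + q) (shuffle A (B :: 'k::{finite,field} vec))"
proof -
  have "FS (shuffle A B)" using assms by (simp add: OK_def)
  moreover have "pos_w w \<and> length w \<le> p + q" if w: "w \<in> supp (shuffle A B)" for w
  proof -
    obtain a b where ab: "a \<in> supp A" "b \<in> supp B" "w \<in> supp (sh_w a b)"
      using w supp_bil_ext[of sh_w A B] unfolding shuffle_def by blast
    have pa: "pos_w a" "length a \<le> p" and pb: "pos_w b" "length b \<le> q"
      using assms ab by (auto simp: OK_def posV_def LB_def)
    have "SPROP a b w" by (rule supp_sh_w[OF pa(1) pb(1) ab(3)])
    then show ?thesis using pa pb by (auto simp: SPROP_def)
  qed
  ultimately show ?thesis by (simp add: OK_def posV_def LB_def)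
qed

lemma OK_sh_w: "pos_w a \<Longrightarrow> pos_w b \<Longrightarrow> OK (length a + length b) (sh_w a b :: 'k::{finite,field} vec)"
  using OK_shuffle[OF OK_basis[of a "length a"] OK_basis[of b "length b"]] by simp

lemma OK_mono: "OK p A \<Longrightarrow> p \<le> q \<Longrightarrow> OK q A"
  by (auto simp: OK_def LB_def)

lemma RT_OK: "RT t \<Longrightarrow> OK 1 (basis t :: 'k::comm_ring_1 vec)"
  by (auto simp: RT_def intro!: OK_basis)

definition Tri :: "'k::{finite,field} vec \<Rightarrow> 'k vec \<Rightarrow> 'k vec" where
  "Tri U = lin_ext (\<lambda>w. case w of [] \<Rightarrow> 0 | m # t \<Rightarrow> pre m (shuffle (basis t) U))"

lemma Tri_pre: "FS W \<Longrightarrow> FS U \<Longrightarrow> Tri U (pre m W) = pre m (shuffle W U)"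
proof -
  assume W: "FS W" and U: "FS U"
  have l1: "linF (\<lambda>W. Tri U (pre m W))" unfolding Tri_def
    by (rule linF_comp[OF lin_ext_linF linF_pre]) auto
  have l2: "linF (\<lambda>W. pre m (shuffle W U))"
    using U by (intro linF_comp[OF linF_pre linF_sh1]) auto
  show ?thesis using linF_ext[OF l1 l2 W] by (simp add: Tri_def)
qed

lemma FS_Tri[simp,intro]: "FS V \<Longrightarrow> FS U \<Longrightarrow> FS (Tri U V)"
  unfolding Tri_def by (rule FS_lin_ext) (auto split: list.splits)

lemma Tri_DSg: "(\<And>l r. FS (H l r)) \<Longrightarrow> Tri U (DSg x y H) = DSg x y (\<lambda>l r. Tri U (H l r))"
  unfolding Tri_def by (rule DSg_linF[OF lin_ext_linF])

lemma Tri_LHS: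
  assumes "FS U"
  shows "Tri U (LHS_LI x y z) = DSg x y (\<lambda>l r. DSg l z (\<lambda>m t. pre m (shuffle (sh_w t r) U)))"
  unfolding LHS_LI_def using assms by (simp add: Tri_DSg Tri_pre)

lemma Tri_RHS:
  assumes "FS U"
  shows "Tri U (RHS_LI x y z) = DSg y z (\<lambda>l t. DSg x l (\<lambda>m t'. pre m (shuffle (sh_w t' t) U)))"
  unfolding RHS_LI_def using assms by (simp add: Tri_DSg Tri_pre)

lemma DSg_cong_RT:
  assumes "1 \<le> fst x" and "\<And>l r. 1 \<le> fst l \<Longrightarrow> RT r \<Longrightarrow> H l r = H' l r"
  shows "DSg x y H = DSg x y H'"
  by (rule DSg_cong[OF assms(1)]) (use assms(2) in \<open>auto simp: RT_def\<close>)

lemma nine: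
  fixes a' b' c' :: "'k::{finite,field} word"
  assumes IH: "\<And>A B C p q r. OK p A \<Longrightarrow> OK q B \<Longrightarrow> OK r C \<Longrightarrow> p + q + r < length (x # a') + length (y # b') + length (z # c') \<Longrightarrow>
      shuffle (shuffle A B) C = shuffle A (shuffle B (C :: 'k vec))"
    and px: "1 \<le> fst x" and py: "1 \<le> fst y" and pz: "1 \<le> fst z"
    and pa': "pos_w a'" and pb': "pos_w b'" and pc': "pos_w c'"
  shows "DSg x y (\<lambda>l r. dm_step l z (shuffle (shuffle (basis r) (sh_w a' b')) (basis c'))) =
            DSg y z (\<lambda>m t. dm_step x m (shuffle (basis a') (shuffle (basis t) (sh_w b' c'))))"
proof -
  let ?S = "sh_w a' b' :: 'k vec" and ?T = "sh_w b' c' :: 'k vec"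
  have OKa: "OK (length a') (basis a' :: 'k vec)" using pa' by (auto intro: OK_basis)
  have OKb: "OK (length b') (basis b' :: 'k vec)" using pb' by (auto intro: OK_basis)
  have OKc: "OK (length c') (basis c' :: 'k vec)" using pc' by (auto intro: OK_basis)
  have OKS: "OK (length a' + length b') ?S" using OK_sh_w[OF pa' pb'] .
  have OKT: "OK (length b' + length c') ?T" using OK_sh_w[OF pb' pc'] .
  let ?U = "shuffle ?S (basis c')"
  have OKU: "OK (length a' + length b' + length c') ?U" using OK_shuffle[OF OKS OKc] .
  have FSU: "FS ?U" using OK_FS[OF OKU] .
  have "DSg x y (\<lambda>l r. dm_step l z (shuffle (shuffle (basis r) ?S) (basis c'))) =
        DSg x y (\<lambda>l r. DSg l z (\<lambda>m t. pre m (shuffle (sh_w t r) ?U)))"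
  proof (rule DSg_cong_RT[OF px])
    fix l :: "'k letter" and r :: "'k word" assume l: "1 \<le> fst l" and r: "RT r"
    have OKr: "OK 1 (basis r :: 'k vec)" using RT_OK[OF r] .
    have "dm_step l z (shuffle (shuffle (basis r) ?S) (basis c')) = DSg l z (\<lambda>m t. pre m (shuffle (basis t) (shuffle (shuffle (basis r) ?S) (basis c'))))"
      by (rule dm_step_DSg) simp
    also have "\<dots> = DSg l z (\<lambda>m t. pre m (shuffle (sh_w t r) ?U))"
    proof (rule DSg_cong_RT[OF l])
      fix m :: "'k letter" and t :: "'k word" assume t: "RT t"
      have OKt: "OK 1 (basis t :: 'k vec)" using RT_OK[OF t] .
      have "shuffle (shuffle (basis r) ?S) (basis c') = shuffle (basis r) ?U"
        using IH[OF OKr OKS OKc] by simp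
      moreover have "shuffle (basis t) (shuffle (basis r) ?U) = shuffle (shuffle (basis t) (basis r)) ?U"
        using IH[OF OKt OKr OKU] by simp
      ultimately show "pre m (shuffle (basis t) (shuffle (shuffle (basis r) ?S) (basis c'))) = pre m (shuffle (sh_w t r) ?U)"
        by simp
    qed
    finally show "dm_step l z (shuffle (shuffle (basis r) ?S) (basis c')) = DSg l z (\<lambda>m t. pre m (shuffle (sh_w t r) ?U))" .
  qed
  also have "\<dots> = Tri ?U (LHS_LI x y z)" by (rule Tri_LHS[OF FSU, symmetric])
  also have "\<dots> = Tri ?U (RHS_LI x y z)" by (simp add: LI[OF px py pz])
  also have "\<dots> = DSg y z (\<lambda>l t. DSg x l (\<lambda>m t'. pre m (shuffle (sh_w t' t) ?U)))" by (rule Tri_RHS[OF FSU])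
  also have "\<dots> = DSg y z (\<lambda>m t. dm_step x m (shuffle (basis a') (shuffle (basis t) ?T)))"
  proof (rule DSg_cong_RT[OF py])
    fix l :: "'k letter" and t :: "'k word" assume t: "RT t"
    have OKt: "OK 1 (basis t :: 'k vec)" using RT_OK[OF t] .
    have key: "shuffle (basis a') (shuffle (basis t) ?T) = shuffle (basis t) ?U"
    proof -
      have "shuffle (basis a') (shuffle (basis t) ?T) = shuffle (shuffle (basis a') (basis t)) ?T"
        using IH[OF OKa OKt OKT] by simp
      also have "\<dots> = shuffle (shuffle (basis t) (basis a')) ?T" using sh_comm[of "basis a'" "basis t"] by simp
      also have "\<dots> = shuffle (basis t) (shuffle (basis a') ?T)"
        using IH[OF OKt OKa OKT] by simp
      also have "shuffle (basis a') ?T = ?U"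
        using IH[OF OKa OKb OKc] by simp
      finally show ?thesis .
    qed
    have "dm_step x l (shuffle (basis a') (shuffle (basis t) ?T)) = DSg x l (\<lambda>m t'. pre m (shuffle (basis t') (shuffle (basis a') (shuffle (basis t) ?T))))"
      by (rule dm_step_DSg) simp
    also have "\<dots> = DSg x l (\<lambda>m t'. pre m (shuffle (sh_w t' t) ?U))"
    proof (rule DSg_cong_RT[OF px])
      fix m :: "'k letter" and t' :: "'k word" assume t': "RT t'"
      have OKt': "OK 1 (basis t' :: 'k vec)" using RT_OK[OF t'] .
      have "shuffle (basis t') (shuffle (basis t) ?U) = shuffle (shuffle (basis t') (basis t)) ?U"
        using IH[OF OKt' OKt OKU] by simp
      then show "pre m (shuffle (basis t') (shuffle (basis a') (shuffle (basis t) ?T))) = pre m (shuffle (sh_w t' t) ?U)"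
        by (simp add: key)
    qed
    finally show "DSg x l (\<lambda>m t'. pre m (shuffle (sh_w t' t) ?U)) = dm_step x l (shuffle (basis a') (shuffle (basis t) ?T))" by simp
  qed
  finally show ?thesis .
qed

lemma word_step:
  fixes a b c :: "'k::{finite,field} word"
  assumes IH: "\<And>A B C p q r. OK p A \<Longrightarrow> OK q B \<Longrightarrow> OK r C \<Longrightarrow> p + q + r < length a + length b + length c \<Longrightarrow>
      shuffle (shuffle A B) C = shuffle A (shuffle B (C :: 'k vec))"
    and pa: "pos_w a" and pb: "pos_w b" and pc: "pos_w c"
  shows "shuffle (sh_w a b) (basis c) = shuffle (basis a) (sh_w b c)"
proof (cases "a = [] \<or> b = [] \<or> c = []")
  case True
  then show ?thesis
  proof (elim disjE)
    assume "a = []" then show ?thesis by (simp add: sh_unit1)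
  next
    assume "b = []" then show ?thesis by (cases a; cases c) auto
  next
    assume "c = []" then show ?thesis by (cases b) (auto simp: sh_unit2)
  qed
next
  case False
  then obtain x a' y b' z c' where abc: "a = x # a'" "b = y # b'" "c = z # c'"
    by (metis list.exhaust)
  let ?N = "length a + length b + length c"
  have px: "1 \<le> fst x" and pa': "pos_w a'" using pa abc by auto
  have py: "1 \<le> fst y" and pb': "pos_w b'" using pb abc by auto
  have pz: "1 \<le> fst z" and pc': "pos_w c'" using pc abc by auto
  have OKa: "OK (length a) (basis a :: 'k vec)" "OK (length a') (basis a' :: 'k vec)" using pa pa' by (auto intro: OK_basis)
  have OKb: "OK (length b) (basis b :: 'k vec)" "OK (length b') (basis b' :: 'k vec)" using pb pb' by (auto intro: OK_basis)
  have OKc: "OK (length c) (basis c :: 'k vec)" "OK (length c') (basis c' :: 'k vec)" using pc pc' by (auto intro: OK_basis)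
  have la: "length a = Suc (length a')" and lb: "length b = Suc (length b')" and lc: "length c = Suc (length c')"
    using abc by auto
  let ?S = "sh_w a' b' :: 'k vec" and ?T = "sh_w b' c' :: 'k vec"
  have OKS: "OK (length a' + length b') ?S" using OK_sh_w[OF pa' pb'] .
  have OKT: "OK (length b' + length c') ?T" using OK_sh_w[OF pb' pc'] .
  have FSb: "\<And>w. FS (basis w :: 'k vec)" by simp
  have M1: "shuffle (sh_w a' (y # b')) (basis (z # c')) = shuffle (basis a') (sh_w (y # b') (z # c'))"
    using IH[OF OKa(2) OKb(1) OKc(1)] la abc by simp
  have M2: "shuffle (sh_w (x # a') b') (basis (z # c')) = shuffle (basis (x # a')) (sh_w b' (z # c'))"
    using IH[OF OKa(1) OKb(2) OKc(1)] lb abc by simp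
  have M3: "shuffle (sh_w (x # a') (y # b')) (basis c') = shuffle (basis (x # a')) (sh_w (y # b') c')"
    using IH[OF OKa(1) OKb(1) OKc(2)] lc abc by simp
  have M4: "dm_step x z (shuffle (sh_w a' (y # b')) (basis c')) = dm_step x z (shuffle (basis a') (sh_w (y # b') c'))"
    using IH[OF OKa(2) OKb(1) OKc(2)] la lc abc by simp
  have M5: "dm_step y z (shuffle (sh_w (x # a') b') (basis c')) = DSg y z (\<lambda>m t. pre m (shuffle (basis (x # a')) (shuffle (basis t) ?T)))"
  proof -
    have "dm_step y z (shuffle (sh_w (x # a') b') (basis c')) = DSg y z (\<lambda>m t. pre m (shuffle (basis t) (shuffle (sh_w (x # a') b') (basis c'))))"
      by (rule dm_step_DSg) simp
    also have "\<dots> = DSg y z (\<lambda>m t. pre m (shuffle (basis (x # a')) (shuffle (basis t) ?T)))"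
    proof (rule DSg_cong_RT[OF py])
      fix l :: "'k letter" and t :: "'k word" assume t: "RT t"
      have OKt: "OK 1 (basis t :: 'k vec)" using RT_OK[OF t] .
      have "shuffle (basis a) (shuffle (basis t) ?T) = shuffle (shuffle (basis a) (basis t)) ?T"
        using IH[OF OKa(1) OKt OKT] la lb lc by simp
      also have "\<dots> = shuffle (shuffle (basis t) (basis a)) ?T" using sh_comm[of "basis a" "basis t"] by simp
      also have "\<dots> = shuffle (basis t) (shuffle (basis a) ?T)"
        using IH[OF OKt OKa(1) OKT] la lb lc by simp
      also have "shuffle (basis a) ?T = shuffle (sh_w a b') (basis c')"
        using IH[OF OKa(1) OKb(2) OKc(2)] lb lc by simp
      finally show "pre l (shuffle (basis t) (shuffle (sh_w (x # a') b') (basis c'))) = pre l (shuffle (basis (x # a')) (shuffle (basis t) ?T))"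
        using abc by simp
    qed
    finally show ?thesis .
  qed
  have M6: "dm_step x y (shuffle (basis a') (sh_w b' (z # c'))) = DSg x y (\<lambda>l r. pre l (shuffle (shuffle (basis r) ?S) (basis (z # c'))))"
  proof -
    have "dm_step x y (shuffle (basis a') (sh_w b' (z # c'))) = DSg x y (\<lambda>l r. pre l (shuffle (basis r) (shuffle (basis a') (sh_w b' (z # c')))))"
      by (rule dm_step_DSg) simp
    also have "\<dots> = DSg x y (\<lambda>l r. pre l (shuffle (shuffle (basis r) ?S) (basis (z # c'))))"
    proof (rule DSg_cong_RT[OF px])
      fix l :: "'k letter" and r :: "'k word" assume r: "RT r"
      have OKr: "OK 1 (basis r :: 'k vec)" using RT_OK[OF r] .
      have "shuffle (shuffle (basis r) ?S) (basis c) = shuffle (basis r) (shuffle ?S (basis c))"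
        using IH[OF OKr OKS OKc(1)] la lb lc by simp
      also have "shuffle ?S (basis c) = shuffle (basis a') (sh_w b' c)"
        using IH[OF OKa(2) OKb(2) OKc(1)] la lb by simp
      finally show "pre l (shuffle (basis r) (shuffle (basis a') (sh_w b' (z # c')))) = pre l (shuffle (shuffle (basis r) ?S) (basis (z # c')))"
        using abc by simp
    qed
    finally show ?thesis .
  qed
  \<comment> \<open>the hard match, via the letter identity\<close>
  let ?U = "shuffle ?S (basis c')"
  have OKU: "OK (length a' + length b' + length c') ?U" using OK_shuffle[OF OKS OKc(2)] .
  have FSU: "FS ?U" using OK_FS[OF OKU] .
  have M7: "DSg x y (\<lambda>l r. dm_step l z (shuffle (shuffle (basis r) ?S) (basis c'))) =
            DSg y z (\<lambda>m t. dm_step x m (shuffle (basis a') (shuffle (basis t) ?T)))"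
    by (rule nine[OF IH[unfolded abc] px py pz pa' pb' pc'])
  show ?thesis
    unfolding abc expand_L expand_R M1 M2 M3 M4 M5 M6 M7 by (simp only: ac_simps)
qed

lemma tri_ext:
  fixes P :: "'k::{finite,field} vec \<Rightarrow> 'k vec \<Rightarrow> 'k vec"
  assumes l1: "\<And>B. FS B \<Longrightarrow> linF (\<lambda>A. P A B)" and l2: "\<And>A. FS A \<Longrightarrow> linF (\<lambda>B. P A B)"
    and fs: "\<And>A B. FS A \<Longrightarrow> FS B \<Longrightarrow> FS (P A B)"
    and A: "FS A" and B: "FS B" and C: "FS C"
    and W: "\<And>a b c. a \<in> supp A \<Longrightarrow> b \<in> supp B \<Longrightarrow> c \<in> supp C \<Longrightarrow>
        P (P (basis a) (basis b)) (basis c) = P (basis a) (P (basis b) (basis c))"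
  shows "P (P A B) C = P A (P B C)"
proof -
  have s2: "P (P (basis a) (basis b)) C = P (basis a) (P (basis b) C)" if a: "a \<in> supp A" and b: "b \<in> supp B" for a b
  proof -
    have L: "linF (\<lambda>C. P (P (basis a) (basis b)) C)" by (rule l2) (simp add: fs)
    have R: "linF (\<lambda>C. P (basis a) (P (basis b) C))" by (rule linF_comp[OF l2 l2]) (auto simp: fs)
    show ?thesis using linF_ext[OF L R C] W[OF a b] by simp
  qed
  have s3: "P (P (basis a) B) C = P (basis a) (P B C)" if a: "a \<in> supp A" for a
  proof -
    have L: "linF (\<lambda>B. P (P (basis a) B) C)" by (rule linF_comp[OF l1 l2]) (auto simp: fs C)
    have R: "linF (\<lambda>B. P (basis a) (P B C))" by (rule linF_comp[OF l2 l1]) (auto simp: fs C)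
    show ?thesis using linF_ext[OF L R B] s2[OF a] by simp
  qed
  have L: "linF (\<lambda>A. P (P A B) C)" by (rule linF_comp[OF l1 l1]) (auto simp: fs B C)
  have R: "linF (\<lambda>A. P A (P B C))" by (rule l1) (simp add: fs B C)
  show ?thesis using linF_ext[OF L R A] s3 by simp
qed

lemma sh_assoc_words:
  "\<forall>a b c. length a + length b + length c = n \<longrightarrow> pos_w a \<longrightarrow> pos_w b \<longrightarrow> pos_w c \<longrightarrow>
     shuffle (sh_w a b) (basis c) = shuffle (basis a) (sh_w b (c :: 'k::{finite,field} word))"
proof (induct n rule: less_induct)
  case (less n)
  show ?case
  proof (intro allI impI)
    fix a b c :: "'k word"
    assume n: "length a + length b + length c = n" and pa: "pos_w a" and pb: "pos_w b" and pc: "pos_w c"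
    show "shuffle (sh_w a b) (basis c) = shuffle (basis a) (sh_w b c)"
    proof (rule word_step[OF _ pa pb pc])
      fix A B C :: "'k vec" and p q r
      assume oA: "OK p A" and oB: "OK q B" and oC: "OK r C" and lt: "p + q + r < length a + length b + length c"
      show "shuffle (shuffle A B) C = shuffle A (shuffle B C)"
      proof (rule tri_ext[OF linF_sh1 linF_sh2 FS_shuffle OK_FS[OF oA] OK_FS[OF oB] OK_FS[OF oC]])
        fix a1 b1 c1 assume a1: "a1 \<in> supp A" and b1: "b1 \<in> supp B" and c1: "c1 \<in> supp C"
        have "pos_w a1 \<and> length a1 \<le> p" using oA a1 by (auto simp: OK_def posV_def LB_def)
        moreover have "pos_w b1 \<and> length b1 \<le> q" using oB b1 by (auto simp: OK_def posV_def LB_def)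
        moreover have "pos_w c1 \<and> length c1 \<le> r" using oC c1 by (auto simp: OK_def posV_def LB_def)
        ultimately have "shuffle (sh_w a1 b1) (basis c1) = shuffle (basis a1) (sh_w b1 c1)"
          using less[of "length a1 + length b1 + length c1"] lt n by auto
        then show "shuffle (shuffle (basis a1) (basis b1)) (basis c1) = shuffle (basis a1) (shuffle (basis b1) (basis c1))"
          by simp
      qed
    qed
  qed
qed

lemma sh_assoc_vec:
  fixes A B C :: "'k::{finite,field} vec"
  assumes "FS A" "FS B" "FS C" "posV A" "posV B" "posV C"
  shows "shuffle (shuffle A B) C = shuffle A (shuffle B C)"
proof (rule tri_ext[OF linF_sh1 linF_sh2 FS_shuffle assms(1-3)])
  fix a b c assume "a \<in> supp A" "b \<in> supp B" "c \<in> supp C"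
  then have "pos_w a" "pos_w b" "pos_w c" using assms by (auto simp: posV_def)
  then have "shuffle (sh_w a b) (basis c) = shuffle (basis a) (sh_w b c)"
    using sh_assoc_words[of "length a + length b + length c"] by blast
  then show "shuffle (shuffle (basis a) (basis b)) (basis c) = shuffle (basis a) (shuffle (basis b) (basis c))"
    by simp
qed

lemma FULL_IH:
  "OK p A \<Longrightarrow> OK q B \<Longrightarrow> OK r C \<Longrightarrow> shuffle (shuffle A B) C = shuffle A (shuffle B (C :: 'k::{finite,field} vec))"
  by (rule sh_assoc_vec) (auto simp: OK_def)

lemma dm_rec_b1: "FS A \<Longrightarrow> diamond (pre x A) (basis (y # b)) = dm_step x y (shuffle A (basis b :: 'k::{finite,field} vec))"
  using dm_rec[of A "basis b" x y] by simp

lemma dm_rec_b2: "FS B \<Longrightarrow> diamond (basis (x # a)) (pre y B) = dm_step x y (shuffle (basis a) (B :: 'k::{finite,field} vec))"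
  using dm_rec[of "basis a" B x y] by simp

lemma dm_assoc_words:
  fixes a b c :: "'k::{finite,field} word"
  assumes pa: "pos_w a" and pb: "pos_w b" and pc: "pos_w c"
  shows "diamond (dm_w a b) (basis c) = diamond (basis a) (dm_w b c)"
proof (cases "a = [] \<or> b = [] \<or> c = []")
  case True
  then show ?thesis
  proof (elim disjE)
    assume "a = []" then show ?thesis by (simp add: dm_unit1)
  next
    assume "b = []" then show ?thesis by (cases a; cases c) auto
  next
    assume "c = []" then show ?thesis by (cases b) (auto simp: dm_unit2)
  qed
next
  case False
  then obtain x a' y b' z c' where abc: "a = x # a'" "b = y # b'" "c = z # c'"
    by (metis list.exhaust)
  have px: "1 \<le> fst x" and pa': "pos_w a'" using pa abc by auto
  have py: "1 \<le> fst y" and pb': "pos_w b'" using pb abc by auto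
  have pz: "1 \<le> fst z" and pc': "pos_w c'" using pc abc by auto
  let ?S = "sh_w a' b' :: 'k vec" and ?T = "sh_w b' c' :: 'k vec"
  have "diamond (dm_w a b) (basis c) = diamond (DSg x y (\<lambda>l r. pre l (shuffle (basis r) ?S))) (pre z (basis c'))"
    using abc by (simp add: dm_step_DSg)
  also have "\<dots> = DSg x y (\<lambda>l r. diamond (pre l (shuffle (basis r) ?S)) (pre z (basis c')))"
    by (rule DSg_linF[OF linF_dm1]) auto
  also have "\<dots> = DSg x y (\<lambda>l r. dm_step l z (shuffle (shuffle (basis r) ?S) (basis c')))"
    by (simp add: dm_rec_b1)
  also have "\<dots> = DSg y z (\<lambda>m t. dm_step x m (shuffle (basis a') (shuffle (basis t) ?T)))"
    by (rule nine[OF FULL_IH px py pz pa' pb' pc'])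
  also have "\<dots> = DSg y z (\<lambda>m t. diamond (basis (x # a')) (pre m (shuffle (basis t) ?T)))"
    by (simp add: dm_rec_b2)
  also have "\<dots> = diamond (basis (x # a')) (DSg y z (\<lambda>m t. pre m (shuffle (basis t) ?T)))"
    by (rule DSg_linF[symmetric, OF linF_dm2]) auto
  also have "\<dots> = diamond (basis a) (dm_w b c)"
    using abc by (simp add: dm_step_DSg)
  finally show ?thesis .
qed

lemma dm_assoc_vec:
  fixes A B C :: "'k::{finite,field} vec"
  assumes "FS A" "FS B" "FS C" "posV A" "posV B" "posV C"
  shows "diamond (diamond A B) C = diamond A (diamond B C)"
proof (rule tri_ext[OF linF_dm1 linF_dm2 FS_diamond assms(1-3)])
  fix a b c assume "a \<in> supp A" "b \<in> supp B" "c \<in> supp C"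
  then have "pos_w a" "pos_w b" "pos_w c" using assms by (auto simp: posV_def)
  then show "diamond (diamond (basis a) (basis b)) (basis c) = diamond (basis a) (diamond (basis b) (basis c))"
    using dm_assoc_words by simp
qed

lemma DD_props: "u \<in> DD \<Longrightarrow> FS u \<and> posV u"
  unfolding DD_def FS_def posV_def valid_word_def pos_w_def by fastforce

theorem proposition5p8:
  fixes u v w :: "('k::{finite,field}) vec"
  assumes "u \<in> DD" and "v \<in> DD" and "w \<in> DD"
  shows "diamond (diamond u v) w = diamond u (diamond v w)
    \<and> shuffle (shuffle u v) w = shuffle u (shuffle v w)"
  using DD_props[OF assms(1)] DD_props[OF assms(2)] DD_props[OF assms(3)]
  by (simp add: dm_assoc_vec sh_assoc_vec)

end
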